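(* Let $G=\langle\alpha\rangle\oplus\langle\beta\rangle$ be the (internal) direct sum of cyclic groups, where $\alpha$ has order $m$ and $\beta$ has order $n$ (both finite). Then the interchange laws belonging to $\Sigma(G;\alpha,\beta)$ form a basis for $\Sigma(G;\alpha,\beta)$ iff $m$ and $n$ are not both multiples of $6$.
   Context: For a multiplicative abelian group $G$ generated by $\alpha$ and $\beta$, $\Sigma(G;\alpha,\beta)$ is the set of groupoid identities satisfied in the integral group ring $\mathbb{Z}[G]$ when the binary operation is $xy=\alpha x+\beta y$. A groupoid term is linear if no variable occurs in it more than once; if $p$ is a linear term and $q$ is obtained from $p$ by swapping two of its variables, then $p=q$ is an interchange law. A basis is a set of identities whose equational consequences are exactly $\Sigma(G;\alpha,\beta)$. *)

theory Defs
  imports "HOL-Algebra.Algebra"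
begin

datatype gterm = Var nat | Op gterm gterm

fun vars :: "gterm \<Rightarrow> nat set" where
  "vars (Var x) = {x}"
| "vars (Op s t) = vars s \<union> vars t"

fun linear_term :: "gterm \<Rightarrow> bool" where
  "linear_term (Var x) = True"
| "linear_term (Op s t) = (linear_term s \<and> linear_term t \<and> vars s \<inter> vars t = {})"

fun subst :: "(nat \<Rightarrow> gterm) \<Rightarrow> gterm \<Rightarrow> gterm" where
  "subst \<sigma> (Var x) = \<sigma> x"
| "subst \<sigma> (Op s t) = Op (subst \<sigma> s) (subst \<sigma> t)"

definition swap_var :: "nat \<Rightarrow> nat \<Rightarrow> nat \<Rightarrow> nat" where
  "swap_var x y z = (if z = x then y else if z = y then x else z)"

definition interchange_law :: "gterm \<times> gterm \<Rightarrow> bool" where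
  "interchange_law e = (case e of (p, q) \<Rightarrow>
     linear_term p \<and> (\<exists>x y. x \<in> vars p \<and> y \<in> vars p \<and> x \<noteq> y \<and>
        q = subst (\<lambda>z. Var (swap_var x y z)) p))"

inductive_set eq_cons :: "(gterm \<times> gterm) set \<Rightarrow> (gterm \<times> gterm) set" for E where
  ax: "e \<in> E \<Longrightarrow> e \<in> eq_cons E"
| refl: "(p, p) \<in> eq_cons E"
| sym: "(p, q) \<in> eq_cons E \<Longrightarrow> (q, p) \<in> eq_cons E"
| trans: "(p, q) \<in> eq_cons E \<Longrightarrow> (q, r) \<in> eq_cons E \<Longrightarrow> (p, r) \<in> eq_cons E"
| subst: "(p, q) \<in> eq_cons E \<Longrightarrow> (subst \<sigma> p, subst \<sigma> q) \<in> eq_cons E"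
| cong: "(p, q) \<in> eq_cons E \<Longrightarrow> (p', q') \<in> eq_cons E \<Longrightarrow> (Op p p', Op q q') \<in> eq_cons E"

definition is_basis :: "(gterm \<times> gterm) set \<Rightarrow> (gterm \<times> gterm) set \<Rightarrow> bool" where
  "is_basis B S = (eq_cons B = S)"

definition grp_ring :: "('a, 'b) monoid_scheme \<Rightarrow> ('a \<Rightarrow> int) set" where
  "grp_ring G = {f. finite {g. f g \<noteq> 0} \<and> {g. f g \<noteq> 0} \<subseteq> carrier G}"

text \<open>Product in Z[G] of the basis element a (a group element) with f.\<close>
definition gmult :: "('a, 'b) monoid_scheme \<Rightarrow> 'a \<Rightarrow> ('a \<Rightarrow> int) \<Rightarrow> ('a \<Rightarrow> int)" where
  "gmult G a f = (\<lambda>g. if g \<in> carrier G then f (inv\<^bsub>G\<^esub> a \<otimes>\<^bsub>G\<^esub> g) else 0)"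

text \<open>Evaluation of a term in Z[G] with xy = \<alpha>x + \<beta>y.\<close>
fun eval :: "('a, 'b) monoid_scheme \<Rightarrow> 'a \<Rightarrow> 'a \<Rightarrow> (nat \<Rightarrow> 'a \<Rightarrow> int) \<Rightarrow> gterm \<Rightarrow> 'a \<Rightarrow> int" where
  "eval G a b env (Var x) = env x"
| "eval G a b env (Op s t) = (\<lambda>g. gmult G a (eval G a b env s) g + gmult G b (eval G a b env t) g)"

definition Sigma_id :: "('a, 'b) monoid_scheme \<Rightarrow> 'a \<Rightarrow> 'a \<Rightarrow> (gterm \<times> gterm) set" where
  "Sigma_id G a b = {(p, q). \<forall>env. (\<forall>x. env x \<in> grp_ring G) \<longrightarrow>
       eval G a b env p = eval G a b env q}"

end

theory Submission
  imports Defs "HOL-Library.Multiset" Complex_Main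
begin


section \<open>Positions\<close>

fun pos :: "gterm \<Rightarrow> bool list set" where
  "pos (Var x) = {[]}"
| "pos (Op a b) = insert [] (Cons False ` pos a \<union> Cons True ` pos b)"

fun sub :: "gterm \<Rightarrow> bool list \<Rightarrow> gterm" where
  "sub t [] = t"
| "sub (Var x) (c # u) = Var x"
| "sub (Op a b) (c # u) = (if c then sub b u else sub a u)"

definition st :: "gterm \<Rightarrow> bool list \<Rightarrow> nat option" where
  "st t u = (case sub t u of Var x \<Rightarrow> Some x | Op _ _ \<Rightarrow> None)"

lemma finite_pos[simp]: "finite (pos t)"
  by (induction t) auto

lemma nil_pos[simp]: "[] \<in> pos t"
  by (cases t) auto

lemma sub_append: "sub t (u @ v) = sub (sub t u) v"
proof (induction t u rule: sub.induct)
  case (2 x c u) then show ?case by (cases v) auto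
qed auto

lemma pos_Cons: "(c # u \<in> pos t) \<longleftrightarrow> (\<exists>a b. t = Op a b \<and> u \<in> pos (if c then b else a))"
  by (cases t) auto

lemma Cons_pos_Op[simp]: "(c # v \<in> pos (Op a b)) = (v \<in> pos (if c then b else a))"
  by auto

lemma sub_Cons_Op[simp]: "sub (Op a b) (c # v) = sub (if c then b else a) v"
  by simp

lemma pos_append: "u @ v \<in> pos t \<longleftrightarrow> u \<in> pos t \<and> v \<in> pos (sub t u)"
proof (induction u arbitrary: t)
  case Nil then show ?case by simp
next
  case (Cons c u) then show ?case by (cases t) (auto simp: pos_Cons)
qed

lemma pos_prefix: "u @ v \<in> pos t \<Longrightarrow> u \<in> pos t"
  by (simp add: pos_append)

lemma pos_snoc: "u @ [c] \<in> pos t \<longleftrightarrow> u \<in> pos t \<and> st t u = None"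
  by (auto simp: pos_append st_def pos_Cons split: gterm.splits)

lemma sub_snoc: "st t u = None \<Longrightarrow> \<exists>a b. sub t u = Op a b \<and> sub t (u @ [False]) = a \<and> sub t (u @ [True]) = b"
  by (auto simp: sub_append st_def split: gterm.splits)

lemma leaf_no_ext: "st t u = Some x \<Longrightarrow> u @ w \<in> pos t \<Longrightarrow> w = []"
  by (cases w) (auto simp: pos_append st_def pos_Cons split: gterm.splits)

section \<open>Nat-pair weights\<close>

fun wz :: "bool list \<Rightarrow> nat \<times> nat" where
  "wz [] = (0, 0)"
| "wz (c # u) = (if c then (fst (wz u), Suc (snd (wz u))) else (Suc (fst (wz u)), snd (wz u)))"

definition shA :: "(nat \<times> nat) multiset \<Rightarrow> (nat \<times> nat) multiset" where
  "shA M = image_mset (\<lambda>(i, j). (Suc i, j)) M"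
definition shB :: "(nat \<times> nat) multiset \<Rightarrow> (nat \<times> nat) multiset" where
  "shB M = image_mset (\<lambda>(i, j). (i, Suc j)) M"
definition shAL :: "((nat \<times> nat) \<times> nat) multiset \<Rightarrow> ((nat \<times> nat) \<times> nat) multiset" where
  "shAL M = image_mset (\<lambda>((i, j), x). ((Suc i, j), x)) M"
definition shBL :: "((nat \<times> nat) \<times> nat) multiset \<Rightarrow> ((nat \<times> nat) \<times> nat) multiset" where
  "shBL M = image_mset (\<lambda>((i, j), x). ((i, Suc j), x)) M"

fun Nmz :: "gterm \<Rightarrow> (nat \<times> nat) multiset" where
  "Nmz (Var x) = {#}"
| "Nmz (Op a b) = {#(0, 0)#} + shA (Nmz a) + shB (Nmz b)"

fun Lfz :: "gterm \<Rightarrow> ((nat \<times> nat) \<times> nat) multiset" where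
  "Lfz (Var x) = {#((0, 0), x)#}"
| "Lfz (Op a b) = shAL (Lfz a) + shBL (Lfz b)"

definition ipos :: "gterm \<Rightarrow> bool list set" where
  "ipos t = {u \<in> pos t. st t u = None}"
definition lpos :: "gterm \<Rightarrow> nat \<Rightarrow> bool list set" where
  "lpos t x = {u \<in> pos t. st t u = Some x}"

lemma ipos_Var[simp]: "ipos (Var x) = {}"
  by (auto simp: ipos_def st_def)
lemma ipos_Op: "ipos (Op a b) = insert [] (Cons False ` ipos a \<union> Cons True ` ipos b)"
  by (auto simp: ipos_def st_def)
lemma lpos_Var: "lpos (Var y) x = (if x = y then {[]} else {})"
  by (auto simp: lpos_def st_def)
lemma lpos_Op: "lpos (Op a b) x = Cons False ` lpos a x \<union> Cons True ` lpos b x"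
  by (auto simp: lpos_def st_def)
lemma finite_ipos[simp]: "finite (ipos t)" by (simp add: ipos_def)
lemma finite_lpos[simp]: "finite (lpos t x)" by (simp add: lpos_def)

lemma Nmz_pos: "Nmz t = image_mset wz (mset_set (ipos t))"
proof (induction t)
  case (Var x) then show ?case by simp
next
  case (Op a b)
  have d: "[] \<notin> Cons False ` ipos a \<union> Cons True ` ipos b" by auto
  have d2: "Cons False ` ipos a \<inter> Cons True ` ipos b = {}" by auto
  have "mset_set (ipos (Op a b)) = {#[]#} + mset_set (Cons False ` ipos a) + mset_set (Cons True ` ipos b)"
    unfolding ipos_Op using d d2 by (simp add: mset_set_Union)
  also have "\<dots> = {#[]#} + image_mset (Cons False) (mset_set (ipos a)) + image_mset (Cons True) (mset_set (ipos b))"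
    by (simp add: image_mset_mset_set)
  finally show ?case using Op
    by (simp add: shA_def shB_def multiset.map_comp o_def case_prod_beta)
qed

definition lvs :: "gterm \<Rightarrow> bool list set" where
  "lvs t = {u \<in> pos t. st t u \<noteq> None}"

lemma lvs_Var[simp]: "lvs (Var x) = {[]}"
  by (auto simp: lvs_def st_def)
lemma lvs_Op: "lvs (Op a b) = Cons False ` lvs a \<union> Cons True ` lvs b"
  by (auto simp: lvs_def st_def)
lemma finite_lvs[simp]: "finite (lvs t)" by (simp add: lvs_def)

lemma Lfz_pos: "Lfz t = image_mset (\<lambda>u. (wz u, the (st t u))) (mset_set (lvs t))"
proof (induction t)
  case (Var x) then show ?case by (simp add: st_def)
next
  case (Op a b)
  have d2: "Cons False ` lvs a \<inter> Cons True ` lvs b = {}" by auto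
  have "mset_set (lvs (Op a b)) = mset_set (Cons False ` lvs a) + mset_set (Cons True ` lvs b)"
    unfolding lvs_Op using d2 by (simp add: mset_set_Union)
  also have "\<dots> = image_mset (Cons False) (mset_set (lvs a)) + image_mset (Cons True) (mset_set (lvs b))"
    by (simp add: image_mset_mset_set)
  finally show ?case using Op
    by (simp add: shAL_def shBL_def multiset.map_comp o_def case_prod_beta st_def)
qed


lemma count_image_mset_set: "finite A \<Longrightarrow> count (image_mset f (mset_set A)) y = card {a \<in> A. f a = y}"
proof -
  assume A: "finite A"
  have "count (image_mset f (mset_set A)) y = sum (count (mset_set A)) (f -` {y} \<inter> A)"
    using A by (simp add: count_image_mset)
  also have "\<dots> = sum (\<lambda>_. 1) (f -` {y} \<inter> A)"
    using A by (intro sum.cong) (auto simp: count_mset_set')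
  also have "\<dots> = card {a \<in> A. f a = y}"
    by (simp add: vimage_def Int_def conj_commute)
  finally show ?thesis .
qed

lemma count_Lfz: "count (Lfz t) (w, x) = card {v \<in> lvs t. wz v = w \<and> st t v = Some x}"
  unfolding Lfz_pos count_image_mset_set[OF finite_lvs]
  by (rule arg_cong[where f=card]) (auto simp: lvs_def)

lemma count_Nmz: "count (Nmz t) w = card {v \<in> ipos t. wz v = w}"
  unfolding Nmz_pos count_image_mset_set[OF finite_ipos] by simp

section \<open>Linearisation and grafting\<close>

fun code :: "bool list \<Rightarrow> nat" where
  "code [] = 1"
| "code (c # u) = 2 * code u + (if c then 1 else 0)"

lemma code_pos: "code u > 0"
  by (induction u) auto

lemma inj_code: "inj code"
proof (rule injI)
  fix u v show "code u = code v \<Longrightarrow> u = v"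
  proof (induction u arbitrary: v)
    case Nil then show ?case using code_pos[of "tl v"] by (cases v) (auto split: if_splits)
  next
    case (Cons c u)
    show ?case
    proof (cases v)
      case Nil then show ?thesis using Cons code_pos[of u] by (auto split: if_splits)
    next
      case (Cons d v')
      have "2 * code u + (if c then 1 else 0) = 2 * code v' + (if d then 1 else 0)"
        using Cons.prems Cons by simp
      then have "c = d \<and> code u = code v'" by (auto split: if_splits; presburger)
      then show ?thesis using Cons.IH Cons by auto
    qed
  qed
qed

fun cl :: "gterm \<Rightarrow> bool list set \<Rightarrow> bool list \<Rightarrow> gterm" where
  "cl (Var x) H u = Var (code u)"
| "cl (Op a b) H u = (if u \<in> H then Var (code u) else Op (cl a H (u @ [False])) (cl b H (u @ [True])))"

fun graft :: "gterm \<Rightarrow> bool list set \<Rightarrow> bool list \<Rightarrow> (bool list \<Rightarrow> gterm) \<Rightarrow> gterm" where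
  "graft (Var x) H u f = f u"
| "graft (Op a b) H u f = (if u \<in> H then f u else Op (graft a H (u @ [False]) f) (graft b H (u @ [True]) f))"

lemma subst_cl: "subst (\<lambda>c. f (inv_into UNIV code c)) (cl t H u) = graft t H u f"
  by (induction t H u f rule: graft.induct) (auto simp: inv_f_f[OF inj_code])

lemma graft_id: "sub T u = t \<Longrightarrow> graft t H u (sub T) = t"
proof (induction t arbitrary: u)
  case (Op a b) then show ?case by (auto simp: sub_append)
qed auto

lemma vars_cl: "x \<in> vars (cl t H u) \<Longrightarrow> \<exists>w. x = code (u @ w)"
proof (induction t H u rule: cl.induct)
  case (1 y H u) then show ?case by (auto intro: exI[of _ "[]"])
next
  case (2 a b H u) then show ?case
    by (auto split: if_splits intro: exI[of _ "[]"])
qed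

lemma linear_cl: "linear_term (cl t H u)"
proof (induction t H u rule: cl.induct)
  case (2 a b H u)
  have "vars (cl a H (u @ [False])) \<inter> vars (cl b H (u @ [True])) = {}"
  proof (rule ccontr)
    assume "\<not> ?thesis"
    then obtain x where "x \<in> vars (cl a H (u @ [False]))" "x \<in> vars (cl b H (u @ [True]))" by blast
    then obtain w1 w2 where "x = code ((u @ [False]) @ w1)" "x = code ((u @ [True]) @ w2)"
      using vars_cl by metis
    then have "(u @ [False]) @ w1 = (u @ [True]) @ w2" using inj_code by (metis injD)
    then show False by simp
  qed
  with 2 show ?case by auto
qed simp

lemma st_cl: "v \<in> pos (cl t H u) \<Longrightarrow> st (cl t H u) v = Some c \<Longrightarrow> c = code (u @ v)"
proof (induction t H u arbitrary: v rule: cl.induct)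
  case (1 y H u) then show ?case by (cases v) (auto simp: st_def)
next
  case (2 a b H u) then show ?case
    by (cases v) (auto simp: st_def split: if_splits)
qed

lemma pos_cl_H:
  assumes "p \<in> pos T" "p \<in> H" "\<And>w w'. p = w @ w' \<Longrightarrow> w' \<noteq> [] \<Longrightarrow> w \<notin> H"
  shows "sub T u = t \<Longrightarrow> u @ v = p \<Longrightarrow> v \<in> pos (cl t H u) \<and> st (cl t H u) v = Some (code p)"
proof (induction t arbitrary: u v)
  case (Var x)
  then have "v \<in> pos (Var x)" using assms(1) pos_append by metis
  with Var show ?case by (auto simp: st_def)
next
  case (Op a b)
  show ?case
  proof (cases "u \<in> H")
    case True
    then have "v = []" using assms(3)[of u v] Op.prems by auto
    with True Op.prems show ?thesis by (auto simp: st_def)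
  next
    case False
    then obtain c v' where v: "v = c # v'" using Op.prems assms(2) by (cases v) auto
    have "sub T (u @ [c]) = (if c then b else a)" using Op.prems by (simp add: sub_append)
    moreover have "(u @ [c]) @ v' = p" using Op.prems v by simp
    ultimately show ?thesis using Op.IH[of "u @ [c]" v'] False v by (cases c) (auto simp: st_def)
  qed
qed

lemma Lfz_rename: "Lfz (subst (\<lambda>z. Var (f z)) t) = image_mset (\<lambda>(w, x). (w, f x)) (Lfz t)"
  by (induction t) (auto simp: shAL_def shBL_def multiset.map_comp o_def case_prod_beta)

definition sext :: "bool list \<Rightarrow> bool list \<Rightarrow> bool" where
  "sext v h = (\<exists>w. w \<noteq> [] \<and> v = h @ w)"

lemma graft_pos:
  assumes "\<And>v. v \<notin> H \<Longrightarrow> f v = sub T v"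
  shows "sub T u = t \<Longrightarrow> u \<in> pos T \<Longrightarrow> (\<forall>h\<in>H. \<not> sext (u @ v) h) \<Longrightarrow>
    (v \<in> pos (graft t H u f) \<longleftrightarrow> u @ v \<in> pos T) \<and>
    (v \<in> pos (graft t H u f) \<longrightarrow> st (graft t H u f) v = (if u @ v \<in> H then st (f (u @ v)) [] else st T (u @ v)))"
proof (induction t arbitrary: u v)
  case (Var x)
  show ?case
  proof (cases v)
    case Nil with Var assms show ?thesis by (auto simp: st_def)
  next
    case (Cons c v')
    then have "u \<notin> H" using Var.prems(3) by (auto simp: sext_def)
    then have "f u = Var x" using assms Var.prems by auto
    moreover have "u @ v \<notin> pos T" using Var.prems Cons by (auto simp: pos_append)
    ultimately show ?thesis using Cons by simp
  qed
next
  case (Op a b)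
  show ?case
  proof (cases "u \<in> H")
    case True
    then have "v = []" using Op.prems(3) by (auto simp: sext_def)
    with True Op.prems show ?thesis by auto
  next
    case False
    show ?thesis
    proof (cases v)
      case Nil with False Op.prems show ?thesis by (auto simp: st_def)
    next
      case (Cons c v')
      have s: "sub T (u @ [c]) = (if c then b else a)" using Op.prems by (simp add: sub_append)
      have p: "u @ [c] \<in> pos T" using Op.prems by (simp add: pos_snoc st_def)
      have e: "(u @ [c]) @ v' = u @ v" using Cons by simp
      have IH: "(v' \<in> pos (graft (if c then b else a) H (u @ [c]) f) \<longleftrightarrow> u @ v \<in> pos T) \<and>
    (v' \<in> pos (graft (if c then b else a) H (u @ [c]) f) \<longrightarrow> st (graft (if c then b else a) H (u @ [c]) f) v' = (if u @ v \<in> H then st (f (u @ v)) [] else st T (u @ v)))"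
        using Op.IH(1)[of "u @ [c]" v'] Op.IH(2)[of "u @ [c]" v'] s p Op.prems e by (cases c) auto
      have g: "graft (Op a b) H u f = Op (graft a H (u @ [False]) f) (graft b H (u @ [True]) f)"
        using False by simp
      show ?thesis unfolding g using IH Cons by (cases c) (auto simp: st_def)
    qed
  qed
qed



lemma Cons_in_image[simp]: "(c # u \<in> Cons d ` A) = (c = d \<and> u \<in> A)"
  by auto

lemma prefix_internal: "u @ w \<in> pos t \<Longrightarrow> w \<noteq> [] \<Longrightarrow> st t u = None"
  by (cases w) (auto simp: pos_append st_def pos_Cons split: gterm.splits)

definition incomp :: "bool list \<Rightarrow> bool list \<Rightarrow> bool" where
  "incomp p q = ((\<nexists>w. q = p @ w) \<and> (\<nexists>w. p = q @ w))"

definition swp :: "gterm \<Rightarrow> bool list \<Rightarrow> bool list \<Rightarrow> gterm" where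
  "swp T p q = graft T {p, q} [] (\<lambda>u. if u = p then sub T q else if u = q then sub T p else sub T u)"

definition mt :: "gterm \<Rightarrow> gterm \<Rightarrow> nat" where
  "mt S T = card {u \<in> pos S. u \<in> pos T \<and> st S u = st T u}"

lemma mt_sym: "mt S T = mt T S"
  unfolding mt_def by (rule arg_cong[where f=card]) auto

lemma mt_le: "mt S T \<le> card (pos S)"
  unfolding mt_def by (rule card_mono) auto

lemma card_pos: "card (pos t) + 1 = 2 * size (Lfz t)"
proof (induction t)
  case (Op a b)
  have "card (pos (Op a b)) = Suc (card (Cons False ` pos a \<union> Cons True ` pos b))"
  proof -
    have "finite (Cons False ` pos a \<union> Cons True ` pos b)" by simp
    moreover have "[] \<notin> Cons False ` pos a \<union> Cons True ` pos b" by auto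
    ultimately show ?thesis unfolding pos.simps by (rule card_insert_disjoint)
  qed
  also have "card (Cons False ` pos a \<union> Cons True ` pos b) = card (Cons False ` pos a) + card (Cons True ` pos b)"
    by (rule card_Un_disjoint) auto
  also have "\<dots> = card (pos a) + card (pos b)"
    by (simp add: card_image)
  finally show ?case using Op by (simp add: shAL_def shBL_def)
qed simp

lemma all_match_eq: "(\<forall>u\<in>pos S. u \<in> pos T \<and> st S u = st T u) \<Longrightarrow> S = T"
proof (induction S arbitrary: T)
  case (Var x)
  have "st T [] = Some x" using Var.prems by (auto simp: st_def)
  then show ?case by (cases T) (auto simp: st_def)
next
  case (Op a b)
  have "st T [] = None" using Op.prems by (auto simp: st_def)
  then obtain c d where T: "T = Op c d" by (cases T) (auto simp: st_def)
  have ha: "\<forall>u\<in>pos a. u \<in> pos c \<and> st a u = st c u"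
  proof
    fix u assume "u \<in> pos a"
    then have "False # u \<in> pos (Op a b)" by simp
    then have "False # u \<in> pos T \<and> st (Op a b) (False # u) = st T (False # u)" using Op.prems by blast
    then show "u \<in> pos c \<and> st a u = st c u" using T by (simp add: st_def)
  qed
  have hb: "\<forall>u\<in>pos b. u \<in> pos d \<and> st b u = st d u"
  proof
    fix u assume "u \<in> pos b"
    then have "True # u \<in> pos (Op a b)" by simp
    then have "True # u \<in> pos T \<and> st (Op a b) (True # u) = st T (True # u)" using Op.prems by blast
    then show "u \<in> pos d \<and> st b u = st d u" using T by (simp add: st_def)
  qed
  show ?case using Op.IH(1)[OF ha] Op.IH(2)[OF hb] T by simp
qed

lemma count_NmzG: "count (image_mset \<phi> (Nmz t)) g = card {u \<in> pos t. st t u = None \<and> \<phi> (wz u) = g}"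
  unfolding Nmz_pos multiset.map_comp count_image_mset_set[OF finite_ipos]
  by (simp add: ipos_def conj_assoc)

lemma count_LfzG: "count (image_mset (apfst \<phi>) (Lfz t)) (g, x) = card {u \<in> pos t. st t u = Some x \<and> \<phi> (wz u) = g}"
  unfolding Lfz_pos multiset.map_comp count_image_mset_set[OF finite_lvs]
  by (rule arg_cong[where f=card]) (auto simp: lvs_def)

lemma step:
  assumes N: "image_mset \<phi> (Nmz S) = image_mset \<phi> (Nmz T)"
    and L: "image_mset (apfst \<phi>) (Lfz S) = image_mset (apfst \<phi>) (Lfz T)"
    and pS: "p \<in> pos S" and pT: "p \<in> pos T" and ne: "st S p \<noteq> st T p"
    and cs: "st S p = None \<or> st T p \<noteq> None"
  shows "\<exists>q. q \<in> pos T \<and> incomp p q \<and> \<phi> (wz p) = \<phi> (wz q) \<and> mt S (swp T p q) > mt S T"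
proof -
  define g where "g = \<phi> (wz p)"
  define \<sigma> where "\<sigma> = st S p"
  have stTp: "st T p \<noteq> None" using cs ne by (cases "st T p") auto
  define Q where "Q = {u \<in> pos T. st T u = \<sigma> \<and> \<phi> (wz u) = g}"
  define P where "P = {u \<in> pos S. st S u = \<sigma> \<and> \<phi> (wz u) = g}"
  have cardQP: "card Q = card P"
  proof (cases \<sigma>)
    case None
    then show ?thesis using arg_cong[OF N, of "\<lambda>M. count M g"]
      unfolding Q_def P_def count_NmzG by simp
  next
    case (Some x)
    then show ?thesis using arg_cong[OF L, of "\<lambda>M. count M (g, x)"]
      unfolding Q_def P_def count_LfzG by simp
  qed
  have "\<not> Q \<subseteq> P"
  proof
    assume "Q \<subseteq> P"
    moreover have "p \<in> P" "p \<notin> Q" using pS ne by (auto simp: P_def Q_def \<sigma>_def g_def)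
    ultimately have "Q \<subset> P" by blast
    then have "card Q < card P" using psubset_card_mono[of P Q] by (simp add: P_def)
    then show False using cardQP by simp
  qed
  then obtain q where qQ: "q \<in> Q" and qP: "q \<notin> P" by blast
  have qT: "q \<in> pos T" and stq: "st T q = \<sigma>" and wq: "\<phi> (wz q) = g" using qQ by (auto simp: Q_def)
  have unm: "\<not> (q \<in> pos S \<and> st S q = st T q)" using qP stq wq by (auto simp: P_def)
  have inc: "incomp p q"
    unfolding incomp_def
  proof (intro conjI notI)
    assume "\<exists>w. q = p @ w"
    then obtain w where w: "q = p @ w" by blast
    show False
    proof (cases "w = []")
      case True then show False using w stq stTp ne by (simp add: \<sigma>_def)
    next
      case False then show False using prefix_internal[of p w T] qT w stTp by simp
    qed
  next
    assume "\<exists>w. p = q @ w"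
    then obtain w where w: "p = q @ w" by blast
    show False
    proof (cases "w = []")
      case True then show False using w stq stTp ne by (simp add: \<sigma>_def)
    next
      case False
      have "q \<in> pos S" using pS w pos_prefix by blast
      moreover have "st S q = None" using prefix_internal[of q w S] pS w False by simp
      moreover have "st T q = None" using prefix_internal[of q w T] pT w False by simp
      ultimately show False using unm by simp
    qed
  qed
  define f where "f = (\<lambda>u. if u = p then sub T q else if u = q then sub T p else sub T u)"
  have fH: "\<And>v. v \<notin> {p, q} \<Longrightarrow> f v = sub T v" by (auto simp: f_def)
  have gp: "\<And>v. \<forall>h\<in>{p,q}. \<not> sext v h \<Longrightarrow>
    (v \<in> pos (swp T p q) \<longleftrightarrow> v \<in> pos T) \<and>
    (v \<in> pos (swp T p q) \<longrightarrow> st (swp T p q) v = (if v \<in> {p,q} then st (f v) [] else st T v))"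
    using graft_pos[of "{p,q}" f T "[]" T, OF fH] unfolding swp_def f_def[symmetric] by simp
  define Old where "Old = {u \<in> pos S. u \<in> pos T \<and> st S u = st T u}"
  define New where "New = {u \<in> pos S. u \<in> pos (swp T p q) \<and> st S u = st (swp T p q) u}"
  have pq: "p \<noteq> q" using inc unfolding incomp_def by auto
  have "Old \<subseteq> New"
  proof
    fix u assume u: "u \<in> Old"
    have "\<not> sext u p"
    proof
      assume "sext u p"
      then obtain w where "w \<noteq> []" "u = p @ w" by (auto simp: sext_def)
      then show False using prefix_internal[of p w T] u stTp by (auto simp: Old_def)
    qed
    moreover have "\<not> sext u q"
    proof
      assume "sext u q"
      then obtain w where w: "w \<noteq> []" "u = q @ w" by (auto simp: sext_def)
      then have "q \<in> pos S" "st S q = None" "st T q = None"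
        using prefix_internal[of q w T] prefix_internal[of q w S] u pos_prefix by (auto simp: Old_def)
      then show False using unm by simp
    qed
    moreover have "u \<noteq> p" using u ne by (auto simp: Old_def)
    moreover have "u \<noteq> q" using u unm by (auto simp: Old_def)
    ultimately show "u \<in> New" using gp[of u] u by (auto simp: Old_def New_def)
  qed
  moreover have "p \<in> New"
  proof -
    have "\<not> sext p p" by (auto simp: sext_def)
    moreover have "\<not> sext p q" using inc by (auto simp: sext_def incomp_def)
    ultimately have "p \<in> pos (swp T p q)" "st (swp T p q) p = st (f p) []"
      using gp[of p] pT by auto
    moreover have "st (f p) [] = st T q" by (simp add: f_def st_def)
    ultimately show ?thesis using pS stq by (auto simp: New_def \<sigma>_def)
  qed
  moreover have "p \<notin> Old" using ne by (auto simp: Old_def)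
  moreover have "finite New" by (simp add: New_def)
  ultimately have "card Old < card New" by (metis psubsetI psubset_card_mono)
  then have "mt S (swp T p q) > mt S T" by (simp add: mt_def Old_def New_def)
  then show ?thesis using qT inc wq by (auto simp: g_def)
qed


lemma size_pos_eq:
  assumes "image_mset (apfst \<phi>) (Lfz S) = image_mset (apfst \<phi>) (Lfz T)"
  shows "card (pos S) = card (pos T)"
proof -
  have "size (Lfz S) = size (Lfz T)" using arg_cong[OF assms, of size] by simp
  then show ?thesis using card_pos[of S] card_pos[of T] by simp
qed

lemma conn:
  assumes refl: "\<And>t. (t, t) \<in> E"
    and sym: "\<And>s t. (s, t) \<in> E \<Longrightarrow> (t, s) \<in> E"
    and trans: "\<And>r s t. (r, s) \<in> E \<Longrightarrow> (s, t) \<in> E \<Longrightarrow> (r, t) \<in> E"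
    and swE: "\<And>T p q. p \<in> pos T \<Longrightarrow> q \<in> pos T \<Longrightarrow> incomp p q \<Longrightarrow> \<phi> (wz p) = \<phi> (wz q) \<Longrightarrow> (T, swp T p q) \<in> E"
    and prN: "\<And>s t. (s, t) \<in> E \<Longrightarrow> image_mset \<phi> (Nmz s) = image_mset \<phi> (Nmz t)"
    and prL: "\<And>s t. (s, t) \<in> E \<Longrightarrow> image_mset (apfst \<phi>) (Lfz s) = image_mset (apfst \<phi>) (Lfz t)"
  shows "image_mset \<phi> (Nmz S) = image_mset \<phi> (Nmz T) \<Longrightarrow>
         image_mset (apfst \<phi>) (Lfz S) = image_mset (apfst \<phi>) (Lfz T) \<Longrightarrow> (S, T) \<in> E"
proof (induction "card (pos S) - mt S T" arbitrary: S T rule: less_induct)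
  case less
  show ?case
  proof (cases "\<forall>u\<in>pos S. u \<in> pos T \<and> st S u = st T u")
    case True
    then show ?thesis using all_match_eq refl by metis
  next
    case False
    then obtain u where "u \<in> pos S \<and> \<not> (u \<in> pos T \<and> st S u = st T u)" by blast
    from ex_has_least_nat[of "\<lambda>u. u \<in> pos S \<and> \<not> (u \<in> pos T \<and> st S u = st T u)", OF this, of length]
    obtain p where p: "p \<in> pos S" "\<not> (p \<in> pos T \<and> st S p = st T p)"
      and minp: "\<And>v. v \<in> pos S \<Longrightarrow> \<not> (v \<in> pos T \<and> st S v = st T v) \<Longrightarrow> length p \<le> length v"
      by blast
    have pT: "p \<in> pos T"
    proof (cases p rule: rev_exhaust)
      case Nil then show ?thesis by simp
    next
      case (snoc p' c)
      have "p' \<in> pos S" "st S p' = None" using p snoc pos_snoc by auto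
      moreover have "length p' < length p" using snoc by simp
      ultimately have "p' \<in> pos T \<and> st T p' = None" using minp[of p'] by fastforce
      then show ?thesis using snoc pos_snoc by auto
    qed
    have ne: "st S p \<noteq> st T p" using p pT by simp
    show ?thesis
    proof (cases "st S p = None \<or> st T p \<noteq> None")
      case True
      from step[OF less.prems p(1) pT ne True] obtain q where
        q: "q \<in> pos T" "incomp p q" "\<phi> (wz p) = \<phi> (wz q)" "mt S (swp T p q) > mt S T" by blast
      define T' where "T' = swp T p q"
      have E1: "(T, T') \<in> E" using swE[OF pT q(1) q(2) q(3)] by (simp add: T'_def)
      have N': "image_mset \<phi> (Nmz S) = image_mset \<phi> (Nmz T')" using prN[OF E1] less.prems by simp
      have L': "image_mset (apfst \<phi>) (Lfz S) = image_mset (apfst \<phi>) (Lfz T')" using prL[OF E1] less.prems by simp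
      have "card (pos S) - mt S T' < card (pos S) - mt S T"
        using q(4) mt_le[of S T'] by (simp add: T'_def)
      then have "(S, T') \<in> E" using less.hyps N' L' by blast
      then show ?thesis using trans sym E1 by blast
    next
      case False
      then have c2: "st T p = None \<or> st S p \<noteq> None" by simp
      from step[OF less.prems(1)[symmetric] less.prems(2)[symmetric] pT p(1) ne[symmetric] c2]
      obtain q where
        q: "q \<in> pos S" "incomp p q" "\<phi> (wz p) = \<phi> (wz q)" "mt T (swp S p q) > mt T S" by blast
      define S' where "S' = swp S p q"
      have E1: "(S, S') \<in> E" using swE[OF p(1) q(1) q(2) q(3)] by (simp add: S'_def)
      have N': "image_mset \<phi> (Nmz S') = image_mset \<phi> (Nmz T)" using prN[OF E1] less.prems by simp
      have L': "image_mset (apfst \<phi>) (Lfz S') = image_mset (apfst \<phi>) (Lfz T)" using prL[OF E1] less.prems by simp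
      have cp: "card (pos S') = card (pos S)" using size_pos_eq[OF prL[OF E1]] by simp
      have "card (pos S') - mt S' T < card (pos S) - mt S T"
        using q(4) mt_le[of T S'] mt_sym[of S' T] mt_sym[of S T] cp size_pos_eq[OF L'] by (simp add: S'_def)
      then have "(S', T) \<in> E" using less.hyps N' L' by blast
      then show ?thesis using trans E1 by blast
    qed
  qed
qed


lemma Nmz_rename: "Nmz (subst (\<lambda>z. Var (f z)) t) = Nmz t"
  by (induction t) auto

lemma st_vars: "u \<in> pos t \<Longrightarrow> st t u = Some x \<Longrightarrow> x \<in> vars t"
proof (induction t arbitrary: u)
  case (Var y) then show ?case by (auto simp: st_def)
next
  case (Op a b) then show ?case by (cases u) (auto simp: st_def split: if_splits)
qed

lemma subst_subst: "subst \<sigma> (subst \<tau> t) = subst (\<lambda>x. subst \<sigma> (\<tau> x)) t"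
  by (induction t) auto

lemma subst_cong: "(\<And>x. x \<in> vars t \<Longrightarrow> \<sigma>1 x = \<sigma>2 x) \<Longrightarrow> subst \<sigma>1 t = subst \<sigma>2 t"
  by (induction t) auto

lemma swap_law_parts:
  assumes pT: "p \<in> pos T" and qT: "q \<in> pos T" and inc: "incomp p q"
  defines "P \<equiv> cl T {p, q} []"
    and "Q \<equiv> subst (\<lambda>z. Var (swap_var (code p) (code q) z)) (cl T {p, q} [])"
    and "\<sigma> \<equiv> (\<lambda>c. sub T (inv_into UNIV code c))"
  shows "linear_term P" "code p \<in> vars P" "code q \<in> vars P" "code p \<noteq> code q"
    "subst \<sigma> P = T" "subst \<sigma> Q = swp T p q"
    "Lfz Q = image_mset (\<lambda>(w, x). (w, swap_var (code p) (code q) x)) (Lfz P)"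
    "{u \<in> pos P. st P u = Some (code p)} = {p}" "{u \<in> pos P. st P u = Some (code q)} = {q}"
proof -
  show "linear_term P" unfolding P_def by (rule linear_cl)
  have pq: "p \<noteq> q" using inc by (auto simp: incomp_def)
  then show cpq: "code p \<noteq> code q" using inj_code by (auto dest: injD)
  have hp: "p \<in> pos P \<and> st P p = Some (code p)"
    unfolding P_def using pos_cl_H[of p T "{p,q}" "[]" T p] pT inc
    by (auto simp: incomp_def)
  have hq: "q \<in> pos P \<and> st P q = Some (code q)"
    unfolding P_def using pos_cl_H[of q T "{p,q}" "[]" T q] qT inc
    by (auto simp: incomp_def)
  show "code p \<in> vars P" using hp st_vars by blast
  show "code q \<in> vars P" using hq st_vars by blast
  have uniq: "\<And>u r. u \<in> pos P \<Longrightarrow> st P u = Some (code r) \<Longrightarrow> u = r"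
    unfolding P_def using st_cl inj_code by (metis append_Nil injD)
  show "{u \<in> pos P. st P u = Some (code p)} = {p}" using hp uniq by blast
  show "{u \<in> pos P. st P u = Some (code q)} = {q}" using hq uniq by blast
  have gid: "graft T {p, q} [] (sub T) = T" using graft_id[of T "[]" T] by simp
  show "subst \<sigma> P = T" unfolding P_def \<sigma>_def subst_cl gid ..
  define f where "f = (\<lambda>u. if u = p then sub T q else if u = q then sub T p else sub T u)"
  have "subst \<sigma> Q = subst (\<lambda>c. \<sigma> (swap_var (code p) (code q) c)) P"
    unfolding Q_def P_def subst_subst by simp
  also have "\<dots> = subst (\<lambda>c. f (inv_into UNIV code c)) P"
  proof (rule subst_cong)
    fix c assume "c \<in> vars P"
    then obtain w where c: "c = code w" using vars_cl unfolding P_def by fastforce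
    have "swap_var (code p) (code q) c = code (if w = p then q else if w = q then p else w)"
      using inj_code c by (auto simp: swap_var_def dest: injD)
    then show "\<sigma> (swap_var (code p) (code q) c) = f (inv_into UNIV code c)"
      unfolding \<sigma>_def f_def c by (simp add: inv_f_f[OF inj_code])
  qed
  also have "\<dots> = graft T {p, q} [] f" unfolding P_def by (rule subst_cl)
  also have "\<dots> = swp T p q" by (simp add: swp_def f_def)
  finally show "subst \<sigma> Q = swp T p q" .
  show "Lfz Q = image_mset (\<lambda>(w, x). (w, swap_var (code p) (code q) x)) (Lfz P)"
    unfolding Q_def P_def by (rule Lfz_rename)
qed


lemma image_mset_Union: "image_mset f (\<Sum>\<^sub># M) = \<Sum>\<^sub># (image_mset (image_mset f) M)"
  by (induction M) auto

lemma sum_mset_indicator: "sum_mset (image_mset (\<lambda>z. if z = c then 1 else 0) M) = (int (count M c))"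
  by (induction M) auto

locale gset = comm_group G for G (structure) +
  fixes a b assumes aC[simp]: "a \<in> carrier G" and bC[simp]: "b \<in> carrier G"
begin

definition phi :: "nat \<times> nat \<Rightarrow> 'a" where
  "phi w = a [^] fst w \<otimes> b [^] snd w"

lemma phi_closed[simp]: "phi w \<in> carrier G"
  by (simp add: phi_def)

lemma phi_0[simp]: "phi (0, 0) = \<one>"
  by (simp add: phi_def)

lemma phi_SucA: "phi (Suc i, j) = a \<otimes> phi (i, j)"
  by (simp add: phi_def nat_pow_Suc2 m_assoc m_lcomm)

lemma phi_SucB: "phi (i, Suc j) = b \<otimes> phi (i, j)"
  by (simp add: phi_def nat_pow_Suc2 m_ac)

definition LfG :: "gterm \<Rightarrow> ('a \<times> nat) multiset" where
  "LfG t = image_mset (apfst phi) (Lfz t)"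
definition NmG :: "gterm \<Rightarrow> 'a multiset" where
  "NmG t = image_mset phi (Nmz t)"

lemma LfG_Var[simp]: "LfG (Var x) = {#(\<one>, x)#}"
  by (simp add: LfG_def)
lemma NmG_Var[simp]: "NmG (Var x) = {#}"
  by (simp add: NmG_def)

lemma LfG_Op: "LfG (Op s t) = image_mset (apfst ((\<otimes>) a)) (LfG s) + image_mset (apfst ((\<otimes>) b)) (LfG t)"
  by (simp add: LfG_def shAL_def shBL_def multiset.map_comp o_def case_prod_beta phi_SucA phi_SucB apfst_def map_prod_def)

lemma NmG_Op: "NmG (Op s t) = {#\<one>#} + image_mset ((\<otimes>) a) (NmG s) + image_mset ((\<otimes>) b) (NmG t)"
  by (simp add: NmG_def shA_def shB_def multiset.map_comp o_def case_prod_beta phi_SucA phi_SucB)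

lemma LfG_carrier: "z \<in># LfG t \<Longrightarrow> fst z \<in> carrier G"
  by (auto simp: LfG_def)
lemma NmG_carrier: "z \<in># NmG t \<Longrightarrow> z \<in> carrier G"
  by (auto simp: NmG_def)

section \<open>Characterisation of Sigma\<close>

lemma eval_formula:
  assumes env: "\<And>x. env x \<in> grp_ring G"
  shows "g \<in> carrier G \<Longrightarrow> eval G a b env t g = sum_mset (image_mset (\<lambda>(h, x). env x (inv h \<otimes> g)) (LfG t))"
proof (induction t arbitrary: g)
  case (Var x) then show ?case by simp
next
  case (Op s t)
  have ia: "inv a \<otimes> g \<in> carrier G" and ib: "inv b \<otimes> g \<in> carrier G" using Op.prems by auto
  have "eval G a b env (Op s t) g = eval G a b env s (inv a \<otimes> g) + eval G a b env t (inv b \<otimes> g)"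
    using Op.prems by (simp add: gmult_def)
  also have "\<dots> = sum_mset (image_mset (\<lambda>(h, x). env x (inv h \<otimes> (inv a \<otimes> g))) (LfG s))
                + sum_mset (image_mset (\<lambda>(h, x). env x (inv h \<otimes> (inv b \<otimes> g))) (LfG t))"
    using Op.IH ia ib by simp
  also have "image_mset (\<lambda>(h, x). env x (inv h \<otimes> (inv a \<otimes> g))) (LfG s)
           = image_mset (\<lambda>(h, x). env x (inv h \<otimes> g)) (image_mset (apfst ((\<otimes>) a)) (LfG s))"
    unfolding multiset.map_comp
    by (rule image_mset_cong) (auto dest!: LfG_carrier simp: inv_mult_group m_assoc Op.prems)
  also have "image_mset (\<lambda>(h, x). env x (inv h \<otimes> (inv b \<otimes> g))) (LfG t)
           = image_mset (\<lambda>(h, x). env x (inv h \<otimes> g)) (image_mset (apfst ((\<otimes>) b)) (LfG t))"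
    unfolding multiset.map_comp
    by (rule image_mset_cong) (auto dest!: LfG_carrier simp: inv_mult_group m_assoc Op.prems)
  finally show ?case by (simp add: LfG_Op)
qed

lemma eval_outside:
  assumes env: "\<And>x. env x \<in> grp_ring G"
  shows "g \<notin> carrier G \<Longrightarrow> eval G a b env t g = 0"
proof (cases t)
  case (Var x)
  assume "g \<notin> carrier G"
  then show ?thesis using env[of x] Var by (auto simp: grp_ring_def)
qed (simp add: gmult_def)

lemma count_sum_ind:
  assumes "g \<in> carrier G"
  shows "sum_mset (image_mset (\<lambda>(h, y). if y = x \<and> h = g then (1::int) else 0) M) = int (count M (g, x))"
proof -
  have "image_mset (\<lambda>(h, y). if y = x \<and> h = g then (1::int) else 0) M = image_mset (\<lambda>z. if z = (g, x) then 1 else 0) M"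
    by (rule image_mset_cong) (auto simp: prod_eq_iff split: prod.splits)
  then show ?thesis using sum_mset_indicator[of "(g, x)" M] by simp
qed

lemma Sigma_char: "(p, q) \<in> Sigma_id G a b \<longleftrightarrow> LfG p = LfG q"
proof
  assume L: "LfG p = LfG q"
  show "(p, q) \<in> Sigma_id G a b"
    unfolding Sigma_id_def
  proof (clarsimp, rule ext)
    fix env :: "nat \<Rightarrow> 'a \<Rightarrow> int" and g assume env: "\<forall>x. env x \<in> grp_ring G"
    show "eval G a b env p g = eval G a b env q g"
      using env eval_formula[of env g] eval_outside[of env g] L by (cases "g \<in> carrier G") auto
  qed
next
  assume S: "(p, q) \<in> Sigma_id G a b"
  show "LfG p = LfG q"
  proof (rule multiset_eqI)
    fix z :: "'a \<times> nat"
    obtain g x where z: "z = (g, x)" by force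
    show "count (LfG p) z = count (LfG q) z"
    proof (cases "g \<in> carrier G")
      case False
      then show ?thesis using z LfG_carrier by (metis count_inI fst_conv)
    next
      case True
      define env :: "nat \<Rightarrow> 'a \<Rightarrow> int" where "env = (\<lambda>y h. if y = x \<and> h = \<one> then (1::int) else 0)"
      have envR: "\<And>y. env y \<in> grp_ring G"
        by (auto simp: env_def grp_ring_def finite_subset[of _ "{\<one>}"])
      have e: "\<And>t. eval G a b env t g = int (count (LfG t) (g, x))"
      proof -
        fix t
        have "image_mset (\<lambda>(h, y). env y (inv h \<otimes> g)) (LfG t) = image_mset (\<lambda>(h, y). if y = x \<and> h = g then 1 else 0) (LfG t)"
        proof (rule image_mset_cong)
          fix w assume w: "w \<in># LfG t"
          obtain h y where hy: "w = (h, y)" by force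
          have hC: "h \<in> carrier G" using LfG_carrier[OF w] hy by simp
          have "(inv h \<otimes> g = \<one>) = (h = g)"
            using hC True by (metis inv_closed inv_inv l_inv r_inv inv_equality)
          then show "(case w of (h, y) \<Rightarrow> env y (inv h \<otimes> g)) = (case w of (h, y) \<Rightarrow> if y = x \<and> h = g then 1 else 0)"
            by (auto simp: hy env_def)
        qed
        then show "eval G a b env t g = int (count (LfG t) (g, x))"
          using eval_formula[OF envR True] count_sum_ind[OF True] by simp
      qed
      have "eval G a b env p = eval G a b env q" using S envR by (auto simp: Sigma_id_def)
      then have "eval G a b env p g = eval G a b env q g" by simp
      then show ?thesis using e z by simp
    qed
  qed
qed

end


context gset
begin

lemma img_compL: "(\<And>z. z \<in># M \<Longrightarrow> fst z \<in> carrier G) \<Longrightarrow> c \<in> carrier G \<Longrightarrow> h \<in> carrier G \<Longrightarrow>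
  image_mset (apfst ((\<otimes>) c)) (image_mset (apfst ((\<otimes>) h)) M) = image_mset (apfst ((\<otimes>) (c \<otimes> h))) M"
  unfolding multiset.map_comp by (rule image_mset_cong) (auto simp: m_assoc apfst_def map_prod_def split: prod.splits)

lemma img_comp: "(\<And>z. z \<in># M \<Longrightarrow> z \<in> carrier G) \<Longrightarrow> c \<in> carrier G \<Longrightarrow> h \<in> carrier G \<Longrightarrow>
  image_mset ((\<otimes>) c) (image_mset ((\<otimes>) h) M) = image_mset ((\<otimes>) (c \<otimes> h)) M"
  unfolding multiset.map_comp by (rule image_mset_cong) (auto simp: m_assoc)

lemma LfG_subst: "LfG (subst \<sigma> t) = \<Sum>\<^sub># (image_mset (\<lambda>(h, x). image_mset (apfst ((\<otimes>) h)) (LfG (\<sigma> x))) (LfG t))"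
proof (induction t)
  case (Var x)
  have "image_mset (apfst ((\<otimes>) \<one>)) (LfG (\<sigma> x)) = image_mset id (LfG (\<sigma> x))"
    by (rule image_mset_cong) (auto dest!: LfG_carrier simp: apfst_def map_prod_def split: prod.splits)
  then show ?case by simp
next
  case (Op s t)
  have h1: "image_mset (apfst ((\<otimes>) c)) (\<Sum>\<^sub># (image_mset (\<lambda>(h, x). image_mset (apfst ((\<otimes>) h)) (LfG (\<sigma> x))) (LfG r)))
     = \<Sum>\<^sub># (image_mset (\<lambda>(h, x). image_mset (apfst ((\<otimes>) h)) (LfG (\<sigma> x))) (image_mset (apfst ((\<otimes>) c)) (LfG r)))"
    if cC: "c \<in> carrier G" for c r
  proof -
    have "image_mset (image_mset (apfst ((\<otimes>) c))) (image_mset (\<lambda>(h, x). image_mset (apfst ((\<otimes>) h)) (LfG (\<sigma> x))) (LfG r))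
       = image_mset (\<lambda>(h, x). image_mset (apfst ((\<otimes>) h)) (LfG (\<sigma> x))) (image_mset (apfst ((\<otimes>) c)) (LfG r))"
      unfolding multiset.map_comp
    proof (rule image_mset_cong)
      fix z assume z: "z \<in># LfG r"
      obtain h x where hx: "z = (h, x)" by force
      have hC: "h \<in> carrier G" using LfG_carrier[OF z] hx by simp
      show "(image_mset (apfst ((\<otimes>) c)) \<circ> (\<lambda>(h, x). image_mset (apfst ((\<otimes>) h)) (LfG (\<sigma> x)))) z =
            ((\<lambda>(h, x). image_mset (apfst ((\<otimes>) h)) (LfG (\<sigma> x))) \<circ> apfst ((\<otimes>) c)) z"
        unfolding hx using img_compL[OF LfG_carrier cC hC] by simp
    qed
    then show ?thesis by (simp add: image_mset_Union)
  qed
  show ?case using Op by (simp add: LfG_Op h1)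
qed

lemma NmG_subst: "NmG (subst \<sigma> t) = NmG t + \<Sum>\<^sub># (image_mset (\<lambda>(h, x). image_mset ((\<otimes>) h) (NmG (\<sigma> x))) (LfG t))"
proof (induction t)
  case (Var x)
  have "image_mset ((\<otimes>) \<one>) (NmG (\<sigma> x)) = image_mset id (NmG (\<sigma> x))"
    by (rule image_mset_cong) (auto dest!: NmG_carrier)
  then show ?case by simp
next
  case (Op s t)
  have h1: "image_mset ((\<otimes>) c) (\<Sum>\<^sub># (image_mset (\<lambda>(h, x). image_mset ((\<otimes>) h) (NmG (\<sigma> x))) (LfG r)))
     = \<Sum>\<^sub># (image_mset (\<lambda>(h, x). image_mset ((\<otimes>) h) (NmG (\<sigma> x))) (image_mset (apfst ((\<otimes>) c)) (LfG r)))"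
    if cC: "c \<in> carrier G" for c r
  proof -
    have "image_mset (image_mset ((\<otimes>) c)) (image_mset (\<lambda>(h, x). image_mset ((\<otimes>) h) (NmG (\<sigma> x))) (LfG r))
       = image_mset (\<lambda>(h, x). image_mset ((\<otimes>) h) (NmG (\<sigma> x))) (image_mset (apfst ((\<otimes>) c)) (LfG r))"
      unfolding multiset.map_comp
    proof (rule image_mset_cong)
      fix z assume z: "z \<in># LfG r"
      obtain h x where hx: "z = (h, x)" by force
      have hC: "h \<in> carrier G" using LfG_carrier[OF z] hx by simp
      show "(image_mset ((\<otimes>) c) \<circ> (\<lambda>(h, x). image_mset ((\<otimes>) h) (NmG (\<sigma> x)))) z =
            ((\<lambda>(h, x). image_mset ((\<otimes>) h) (NmG (\<sigma> x))) \<circ> apfst ((\<otimes>) c)) z"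
        unfolding hx using img_comp[OF NmG_carrier cC hC] by simp
    qed
    then show ?thesis by (simp add: image_mset_Union)
  qed
  show ?case using Op by (simp add: NmG_Op LfG_Op h1)
qed

abbreviation "BB \<equiv> Sigma_id G a b \<inter> {e. interchange_law e}"

lemma NmG_rename: "NmG (subst (\<lambda>z. Var (f z)) t) = NmG t"
  by (simp add: NmG_def Nmz_rename)

lemma E_inv0: "x \<in> eq_cons BB \<Longrightarrow> LfG (fst x) = LfG (snd x) \<and> NmG (fst x) = NmG (snd x)"
proof (induction x rule: eq_cons.induct)
  case (ax e)
  obtain p q where e: "e = (p, q)" by force
  have L: "LfG p = LfG q" using ax e Sigma_char by auto
  from ax e obtain x y where "q = subst (\<lambda>z. Var (swap_var x y z)) p"
    by (auto simp: interchange_law_def)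
  then have "NmG p = NmG q" by (simp add: NmG_rename)
  with L e show ?case by simp
next
  case (refl p) show ?case by simp
next
  case (sym p q) then show ?case by simp
next
  case (trans p q r) then show ?case by simp
next
  case (subst p q \<sigma>) then show ?case by (simp add: LfG_subst NmG_subst)
next
  case (cong p q p' q') then show ?case by (simp add: LfG_Op NmG_Op)
qed

lemma E_inv: "(s, t) \<in> eq_cons BB \<Longrightarrow> LfG s = LfG t \<and> NmG s = NmG t"
  using E_inv0[of "(s, t)"] by simp

lemma E_Sigma: "(s, t) \<in> eq_cons BB \<Longrightarrow> (s, t) \<in> Sigma_id G a b"
  using E_inv Sigma_char by blast

lemma count_image_inv:
  assumes "\<And>x. f (f x) = x"
  shows "count (image_mset f M) y = count M (f y)"
proof -
  have e: "\<And>x. (f x = y) = (x = f y)" using assms by metis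
  have v: "f -` {y} = {f y}" using e by auto
  show ?thesis unfolding count_image_mset v by (cases "f y \<in># M") (auto simp: count_eq_zero_iff)
qed

lemma swap_in_E:
  assumes pT: "p \<in> pos T" and qT: "q \<in> pos T" and inc: "incomp p q" and w: "phi (wz p) = phi (wz q)"
  shows "(T, swp T p q) \<in> eq_cons BB"
proof -
  define P where "P = cl T {p, q} []"
  define sw where "sw = swap_var (code p) (code q)"
  define Q where "Q = subst (\<lambda>z. Var (sw z)) P"
  define \<sigma> where "\<sigma> = (\<lambda>c. sub T (inv_into UNIV code c))"
  have parts: "linear_term P" "code p \<in> vars P" "code q \<in> vars P" "code p \<noteq> code q"
    "subst \<sigma> P = T" "subst \<sigma> Q = swp T p q"
    "Lfz Q = image_mset (\<lambda>(w, x). (w, sw x)) (Lfz P)"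
    "{u \<in> pos P. st P u = Some (code p)} = {p}" "{u \<in> pos P. st P u = Some (code q)} = {q}"
    using swap_law_parts[OF pT qT inc] unfolding P_def sw_def Q_def \<sigma>_def by auto
  have swsw: "\<And>x. sw (sw x) = x" by (simp add: sw_def swap_var_def)
  have LQ: "LfG Q = image_mset (apsnd sw) (LfG P)"
    unfolding LfG_def parts(7) multiset.map_comp
    by (rule image_mset_cong) (auto simp: apfst_def apsnd_def map_prod_def)
  have cp: "count (LfG P) (g, code r) = card ({r} \<inter> {u. phi (wz u) = g})"
    if r: "{u \<in> pos P. st P u = Some (code r)} = {r}" for g r
  proof -
    have "{u \<in> pos P. st P u = Some (code r) \<and> phi (wz u) = g} = {r} \<inter> {u. phi (wz u) = g}"
      using r by blast
    then show ?thesis unfolding LfG_def count_LfzG by simp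
  qed
  have cnt: "count (LfG P) (g, code p) = count (LfG P) (g, code q)" for g
  proof -
    have "card ({p} \<inter> {u. phi (wz u) = g}) = card ({q} \<inter> {u. phi (wz u) = g})"
      using w by (cases "phi (wz p) = g") auto
    then show ?thesis using cp[OF parts(8)] cp[OF parts(9)] by simp
  qed
  have "LfG Q = LfG P"
  proof (rule multiset_eqI)
    fix z :: "'a \<times> nat"
    obtain g c where z: "z = (g, c)" by force
    have inv: "\<And>y. apsnd sw (apsnd sw y) = y" by (simp add: apsnd_def map_prod_def swsw split: prod.splits)
    have "count (LfG Q) z = count (LfG P) (apsnd sw (g, c))"
      unfolding LQ z by (rule count_image_inv[OF inv])
    also have "\<dots> = count (LfG P) (g, c)"
      using cnt by (auto simp: sw_def swap_var_def)
    finally show "count (LfG Q) z = count (LfG P) z" using z by simp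
  qed
  then have "(P, Q) \<in> Sigma_id G a b" using Sigma_char by simp
  moreover have "interchange_law (P, Q)"
    unfolding interchange_law_def using parts(1-4) by (auto simp: Q_def sw_def)
  ultimately have "(P, Q) \<in> eq_cons BB" by (auto intro: eq_cons.ax)
  then have "(subst \<sigma> P, subst \<sigma> Q) \<in> eq_cons BB" by (rule eq_cons.subst)
  then show ?thesis using parts(5,6) by simp
qed


lemma conn_G: "NmG S = NmG T \<Longrightarrow> LfG S = LfG T \<Longrightarrow> (S, T) \<in> eq_cons BB"
  unfolding NmG_def LfG_def
proof (rule conn[where \<phi> = phi])
  show "\<And>t. (t, t) \<in> eq_cons BB" by (rule eq_cons.refl)
  show "\<And>s t. (s, t) \<in> eq_cons BB \<Longrightarrow> (t, s) \<in> eq_cons BB" by (rule eq_cons.sym)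
  show "\<And>r s t. (r, s) \<in> eq_cons BB \<Longrightarrow> (s, t) \<in> eq_cons BB \<Longrightarrow> (r, t) \<in> eq_cons BB" by (rule eq_cons.trans)
  show "\<And>T p q. p \<in> pos T \<Longrightarrow> q \<in> pos T \<Longrightarrow> incomp p q \<Longrightarrow> phi (wz p) = phi (wz q) \<Longrightarrow> (T, swp T p q) \<in> eq_cons BB"
    by (rule swap_in_E)
  show "\<And>s t. (s, t) \<in> eq_cons BB \<Longrightarrow> image_mset phi (Nmz s) = image_mset phi (Nmz t)"
    using E_inv by (simp add: NmG_def)
  show "\<And>s t. (s, t) \<in> eq_cons BB \<Longrightarrow> image_mset (apfst phi) (Lfz s) = image_mset (apfst phi) (Lfz t)"
    using E_inv by (simp add: LfG_def)
qed

end


lemma six_dvd: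
  fixes z :: complex
  assumes q: "z ^ 2 = z - 1" and zm: "z ^ m = 1"
  shows "6 dvd m"
proof -
  have z3: "z ^ 3 = -1"
  proof -
    have "z ^ 3 = z * z ^ 2" by (simp add: power_def)
    also have "\<dots> = z * (z - 1)" using q by simp
    also have "\<dots> = z ^ 2 - z" by (simp add: algebra_simps power2_eq_square)
    finally show ?thesis using q by simp
  qed
  have z6: "z ^ 6 = 1"
  proof -
    have "z ^ 6 = (z ^ 3) ^ 2" by (simp flip: power_mult)
    then show ?thesis using z3 by simp
  qed
  have zr: "z ^ (m mod 6) = 1"
  proof -
    have "z ^ m = (z ^ 6) ^ (m div 6) * z ^ (m mod 6)"
      by (simp flip: power_mult power_add)
    then show ?thesis using z6 zm by simp
  qed
  have z0: "z \<noteq> 0" using q by auto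
  have z1: "z \<noteq> 1" using q by auto
  have "m mod 6 < 6" by simp
  then consider "m mod 6 = 0" | "m mod 6 = 1" | "m mod 6 = 2" | "m mod 6 = 3" | "m mod 6 = 4" | "m mod 6 = 5" by linarith
  then show ?thesis
  proof cases
    case 1 then show ?thesis by presburger
  next
    case 2 then show ?thesis using zr z1 by simp
  next
    case 3
    then have "z - 1 = 1" using zr q by simp
    then have "z = 2" by (simp add: algebra_simps)
    then show ?thesis using q by (simp add: power2_eq_square)
  next
    case 4 then show ?thesis using zr z3 by simp
  next
    case 5
    have "z ^ 4 = z * z ^ 3" by (simp add: power_def)
    then have "z ^ 4 = - z" using z3 by simp
    then have "z = -1" using zr 5 by (simp add: minus_equation_iff)
    then show ?thesis using q by (simp add: power2_eq_square)
  next
    case 6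
    have "z ^ 5 = z ^ 2 * z ^ 3" by (simp flip: power_add)
    then have "z ^ 5 = 1 - z" using z3 q by (simp add: algebra_simps)
    then have "z = 0" using zr 6 by simp
    then show ?thesis using z0 by simp
  qed
qed

lemma unit_norm:
  fixes z :: complex
  assumes "z ^ m = 1" "m > 0"
  shows "z * cnj z = 1"
proof -
  have "norm z ^ m = 1 ^ m" using assms by (simp flip: norm_power)
  then have "norm z = 1" using assms power_eq_iff_eq_base[of m "norm z" 1] by simp
  then show ?thesis using complex_norm_square[of z] by simp
qed

lemma root_pair_six:
  fixes z :: complex
  assumes zm: "z ^ m = 1" and wn: "(1 - z) ^ n = 1" and m: "m > 0" and n: "n > 0"
  shows "6 dvd m \<and> 6 dvd n"
proof -
  have a: "z * cnj z = 1" using unit_norm[OF zm m] .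
  have b: "(1 - z) * cnj (1 - z) = 1" using unit_norm[OF wn n] .
  then have "1 - z - cnj z + z * cnj z = 1" by (simp add: algebra_simps)
  then have c: "cnj z = 1 - z" using a by (simp add: algebra_simps)
  then have "z * (1 - z) = 1" using a by simp
  then have q: "z ^ 2 = z - 1" by (simp add: algebra_simps power2_eq_square)
  have q2: "(1 - z) ^ 2 = (1 - z) - 1" using q by (simp add: algebra_simps power2_eq_square)
  show ?thesis using six_dvd[OF q zm] six_dvd[OF q2 wn] by simp
qed

lemma sum_shift_periodic:
  fixes h :: "nat \<Rightarrow> 'a::ab_group_add"
  assumes "h m = h 0"
  shows "(\<Sum>i<m. h (Suc i)) = (\<Sum>i<m. h i)"
proof -
  have "(\<Sum>i<Suc m. h i) = h 0 + (\<Sum>i<m. h (Suc i))" by (rule sum.lessThan_Suc_shift)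
  moreover have "(\<Sum>i<Suc m. h i) = (\<Sum>i<m. h i) + h m" by simp
  ultimately show ?thesis using assms by (simp add: add.commute)
qed

lemma root_unity_ne1:
  assumes m: "m > 0" and r: "0 < r" "r < m"
  shows "cis (2 * pi / real m) ^ r \<noteq> 1"
proof
  assume h: "cis (2 * pi / real m) ^ r = 1"
  have inj: "inj_on (\<lambda>k. cis (2 * pi * real k / real m)) {..<m}"
    using bij_betw_roots_unity[OF m] by (simp add: bij_betw_def)
  have e: "(\<lambda>k. cis (2 * pi * real k / real m)) r = (\<lambda>k. cis (2 * pi * real k / real m)) 0"
    using h by (simp add: DeMoivre mult_ac)
  have "r = 0" using inj_onD[OF inj e] r m by simp
  then show False using r by simp
qed

lemma geom_root:
  fixes m e :: nat
  assumes m: "m > 0"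
  defines "\<omega> \<equiv> cis (2 * pi / real m)"
  shows "(\<Sum>t<m. (\<omega> ^ e) ^ t) = (if m dvd e then of_nat m else 0)"
proof -
  have wm: "\<omega> ^ m = 1" using m by (simp add: \<omega>_def DeMoivre)
  have we: "\<omega> ^ e = \<omega> ^ (e mod m)"
  proof -
    have "\<omega> ^ e = (\<omega> ^ m) ^ (e div m) * \<omega> ^ (e mod m)" by (simp flip: power_mult power_add)
    then show ?thesis using wm by simp
  qed
  show ?thesis
  proof (cases "m dvd e")
    case True
    then have "\<omega> ^ e = 1" using we by simp
    then show ?thesis using True by simp
  next
    case False
    then have "0 < e mod m" "e mod m < m" using m by (auto simp: mod_greater_zero_iff_not_dvd)
    then have ne: "\<omega> ^ e \<noteq> 1" using we root_unity_ne1[OF m] by (simp add: \<omega>_def)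
    have "(\<omega> ^ e) ^ m = 1" using wm by (metis power_mult mult.commute power_one)
    then show ?thesis using geometric_sum[OF ne, of m] False by simp
  qed
qed

lemma pw: "((w::complex) ^ t) ^ a * (w ^ t) ^ b = (w ^ (b + a)) ^ t"
  by (simp flip: power_add power_mult add: algebra_simps)

lemma dvd_window: "0 < (x::nat) \<Longrightarrow> x < 2 * m \<Longrightarrow> m dvd x \<longleftrightarrow> x = m"
proof
  assume x: "0 < x" "x < 2 * m" and "m dvd x"
  then obtain k where k: "x = m * k" by (auto simp: dvd_def)
  have "k \<noteq> 0" using k x by auto
  moreover have "k < 2" using k x mult_less_cancel2[of k m 2] by (simp add: mult.commute)
  ultimately have "k = 1" by simp
  then show "x = m" using k by simp
qed simp

lemma kernel_zero:
  fixes K :: "nat \<Rightarrow> nat \<Rightarrow> int" and m n :: nat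
  assumes m: "m > 0" and n: "n > 0"
    and perA: "\<And>i j. K (i + m) j = K i j" and perB: "\<And>i j. K i (j + n) = K i j"
    and rec: "\<And>i j. K (Suc i) (Suc j) = K i (Suc j) + K (Suc i) j"
    and no6: "\<not> (6 dvd m \<and> 6 dvd n)"
  shows "K i j = 0"
proof -
  define F where "F = (\<lambda>(z::complex) j. \<Sum>i<m. of_int (K i j) * z ^ i)"
  have F0: "F z j = 0" if zm: "z ^ m = 1" for z j
  proof -
    have stepF: "F z j = (1 - z) * F z (Suc j)" for j
    proof -
      have "F z (Suc j) = (\<Sum>i<m. of_int (K (Suc i) (Suc j)) * z ^ Suc i)"
        unfolding F_def case_prod_conv
        by (rule sum_shift_periodic[where h = "\<lambda>i. of_int (K i (Suc j)) * z ^ i", symmetric])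
           (use perA[of 0] zm in simp)
      also have "\<dots> = z * F z (Suc j) + (\<Sum>i<m. of_int (K (Suc i) j) * z ^ Suc i)"
        unfolding F_def by (simp add: rec algebra_simps sum.distrib sum_distrib_left)
      also have "(\<Sum>i<m. of_int (K (Suc i) j) * z ^ Suc i) = F z j"
        unfolding F_def case_prod_conv
        by (rule sum_shift_periodic[where h = "\<lambda>i. of_int (K i j) * z ^ i"])
           (use perA[of 0] zm in simp)
      finally show ?thesis by (simp add: algebra_simps)
    qed
    have iter: "F z j = (1 - z) ^ k * F z (j + k)" for k
    proof (induction k)
      case (Suc k)
      then show ?case using stepF[of "j + k"] by (simp add: algebra_simps)
    qed simp
    have "F z (j + n) = F z j" unfolding F_def by (simp add: perB)
    then have e: "F z j = (1 - z) ^ n * F z j" using iter[of n] by simp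
    have e2: "F z j - (1 - z) ^ n * F z j = 0" using e by (metis right_minus_eq)
    have "(1 - (1 - z) ^ n) * F z j = F z j - (1 - z) ^ n * F z j" by (simp add: algebra_simps)
    with e2 have "(1 - (1 - z) ^ n) * F z j = 0" by simp
    moreover have "(1 - z) ^ n \<noteq> 1" using root_pair_six[OF zm _ m n] no6 by blast
    ultimately show ?thesis by simp
  qed
  define \<omega> where "\<omega> = cis (2 * pi / real m)"
  have wm: "\<omega> ^ m = 1" using m by (simp add: \<omega>_def DeMoivre)
  have Kmod: "K i j = K (i mod m) j" for i
  proof -
    have "K (i mod m + m * k) j = K (i mod m) j" for k
    proof (induction k)
      case (Suc k)
      have "K (i mod m + m * Suc k) j = K ((i mod m + m * k) + m) j" by (simp add: algebra_simps)
      also have "\<dots> = K (i mod m + m * k) j" by (rule perA)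
      finally show ?case using Suc.IH by simp
    qed simp
    then show ?thesis by (metis mod_mult_div_eq)
  qed
  have "K i0 j = 0" if i0: "i0 < m" for i0
  proof -
    have wt: "(\<omega> ^ t) ^ m = 1" for t using wm by (metis power_mult mult.commute power_one)
    have "0 = (\<Sum>t<m. (\<omega> ^ t) ^ (m - i0) * F (\<omega> ^ t) j)"
      using F0[OF wt] by simp
    also have "\<dots> = (\<Sum>t<m. \<Sum>i<m. of_int (K i j) * (\<omega> ^ (i + (m - i0))) ^ t)"
      unfolding F_def sum_distrib_left
      by (intro sum.cong HOL.refl) (simp add: pw mult.left_commute)
    also have "\<dots> = (\<Sum>i<m. of_int (K i j) * (\<Sum>t<m. (\<omega> ^ (i + (m - i0))) ^ t))"
      by (subst sum.swap) (simp add: sum_distrib_left)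
    also have "\<dots> = (\<Sum>i<m. if i = i0 then of_int (K i j) * of_nat m else 0)"
    proof (rule sum.cong[OF HOL.refl])
      fix i assume "i \<in> {..<m}"
      then have "m dvd (i + (m - i0)) \<longleftrightarrow> i = i0" using i0 dvd_window[of "i + (m - i0)" m]
        by auto
      then show "of_int (K i j) * (\<Sum>t<m. (\<omega> ^ (i + (m - i0))) ^ t) = (if i = i0 then of_int (K i j) * of_nat m else 0)"
        using geom_root[OF m, of "i + (m - i0)"] by (simp add: \<omega>_def)
    qed
    also have "\<dots> = of_int (K i0 j) * of_nat m" using i0 by simp
    finally show ?thesis using m by simp
  qed
  then show ?thesis using Kmod[of i] m by simp
qed


lemma Nmz_Lfz_rel: "Nmz t + image_mset fst (Lfz t) = {#(0, 0)#} + shA (Nmz t) + shB (Nmz t)"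
proof (induction t)
  case (Var x) then show ?case by (simp add: shA_def shB_def)
next
  case (Op s t)
  have fA: "image_mset fst (shAL M) = shA (image_mset fst M)" for M
    by (simp add: shAL_def shA_def multiset.map_comp o_def case_prod_beta)
  have fB: "image_mset fst (shBL M) = shB (image_mset fst M)" for M
    by (simp add: shBL_def shB_def multiset.map_comp o_def case_prod_beta)
  have AB: "shA (shB M) = shB (shA M)" for M
    by (simp add: shA_def shB_def multiset.map_comp o_def case_prod_beta)
  have lA: "shA (M + N) = shA M + shA N" for M N by (simp add: shA_def)
  have lB: "shB (M + N) = shB M + shB N" for M N by (simp add: shB_def)
  have sA: "shA {#(0, 0)#} = {#(1, 0)#}" by (simp add: shA_def)
  have sB: "shB {#(0, 0)#} = {#(0, 1)#}" by (simp add: shB_def)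
  have "Nmz (Op s t) + image_mset fst (Lfz (Op s t)) =
        {#(0, 0)#} + shA (Nmz s + image_mset fst (Lfz s)) + shB (Nmz t + image_mset fst (Lfz t))"
    by (simp add: fA fB lA lB add_ac)
  also have "\<dots> = {#(0, 0)#} + shA ({#(0, 0)#} + shA (Nmz s) + shB (Nmz s)) + shB ({#(0, 0)#} + shA (Nmz t) + shB (Nmz t))"
    using Op by simp
  also have "\<dots> = {#(0, 0)#} + shA (Nmz (Op s t)) + shB (Nmz (Op s t))"
    by (simp add: shA_def shB_def multiset.map_comp o_def case_prod_beta add_ac)
  finally show ?case .
qed

context gset
begin

definition WG :: "gterm \<Rightarrow> 'a multiset" where
  "WG t = image_mset fst (LfG t)"

lemma NmG_WG_rel: "NmG t + WG t = {#\<one>#} + image_mset ((\<otimes>) a) (NmG t) + image_mset ((\<otimes>) b) (NmG t)"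
proof -
  have "image_mset phi (Nmz t + image_mset fst (Lfz t)) = image_mset phi ({#(0, 0)#} + shA (Nmz t) + shB (Nmz t))"
    using Nmz_Lfz_rel by simp
  moreover have "image_mset phi (shA M) = image_mset ((\<otimes>) a) (image_mset phi M)" for M
    by (simp add: shA_def multiset.map_comp o_def case_prod_beta phi_SucA)
  moreover have "image_mset phi (shB M) = image_mset ((\<otimes>) b) (image_mset phi M)" for M
    by (simp add: shB_def multiset.map_comp o_def case_prod_beta phi_SucB)
  moreover have "image_mset phi (image_mset fst (Lfz t)) = WG t"
    by (simp add: WG_def LfG_def multiset.map_comp o_def)
  ultimately show ?thesis by (simp add: NmG_def)
qed

lemma count_shift:
  assumes c: "c \<in> carrier G" and g: "g \<in> carrier G" and M: "\<And>z. z \<in># M \<Longrightarrow> z \<in> carrier G"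
  shows "count (image_mset ((\<otimes>) c) M) g = count M (inv c \<otimes> g)"
proof -
  have h: "\<And>x. x \<in> carrier G \<Longrightarrow> (c \<otimes> x = g) = (x = inv c \<otimes> g)"
    using c g by (metis inv_closed l_inv m_assoc l_one m_closed r_inv)
  have v: "((\<otimes>) c) -` {g} \<inter> set_mset M = {inv c \<otimes> g} \<inter> set_mset M"
    using h M by auto
  show ?thesis unfolding count_image_mset v by (cases "inv c \<otimes> g \<in># M") (auto simp: count_eq_zero_iff)
qed

lemma phi_add: "phi (i + i', j + j') = phi (i, j) \<otimes> phi (i', j')"
  by (simp add: phi_def nat_pow_mult[symmetric] m_ac)

lemma W_determines_N:
  fixes m n :: nat
  assumes am: "a [^] m = \<one>" and bn: "b [^] n = \<one>" and m: "m > 0" and n: "n > 0"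
    and gen: "carrier G \<subseteq> range phi"
    and no6: "\<not> (6 dvd m \<and> 6 dvd n)"
    and W: "WG S = WG T"
  shows "NmG S = NmG T"
proof -
  define k where "k = (\<lambda>g. int (count (NmG S) g) - int (count (NmG T) g))"
  have rel: "k g = k (inv a \<otimes> g) + k (inv b \<otimes> g)" if g: "g \<in> carrier G" for g
  proof -
    have c: "count (NmG t) g + count (WG t) g = (if g = \<one> then 1 else 0) + count (NmG t) (inv a \<otimes> g) + count (NmG t) (inv b \<otimes> g)" for t
      using arg_cong[OF NmG_WG_rel[of t], of "\<lambda>M. count M g"]
      using count_shift[OF aC g NmG_carrier] count_shift[OF bC g NmG_carrier] by auto
    show ?thesis using c[of S] c[of T] W unfolding k_def by simp
  qed
  define K where "K = (\<lambda>i j. k (phi (i, j)))"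
  have perA: "K (i + m) j = K i j" for i j
  proof -
    have "phi (i + m, j) = phi (i, j)" using phi_add[of i m j 0] am by (simp add: phi_def)
    then show ?thesis by (simp add: K_def)
  qed
  have perB: "K i (j + n) = K i j" for i j
  proof -
    have "phi (i, j + n) = phi (i, j)" using phi_add[of i 0 j n] bn by (simp add: phi_def)
    then show ?thesis by (simp add: K_def)
  qed
  have recK: "K (Suc i) (Suc j) = K i (Suc j) + K (Suc i) j" for i j
  proof -
    have "inv a \<otimes> phi (Suc i, Suc j) = phi (i, Suc j)"
      by (simp add: phi_SucA m_assoc[symmetric])
    moreover have "inv b \<otimes> phi (Suc i, Suc j) = phi (Suc i, j)"
      by (simp add: phi_SucB m_assoc[symmetric])
    ultimately show ?thesis using rel[of "phi (Suc i, Suc j)"] by (simp add: K_def)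
  qed
  have K0: "K i j = 0" for i j by (rule kernel_zero[OF m n perA perB recK no6])
  show ?thesis
  proof (rule multiset_eqI)
    fix g
    show "count (NmG S) g = count (NmG T) g"
    proof (cases "g \<in> carrier G")
      case True
      then obtain w where "g = phi w" using gen by auto
      then have "k g = 0" using K0[of "fst w" "snd w"] by (simp add: K_def)
      then show ?thesis by (simp add: k_def)
    next
      case False
      then show ?thesis using NmG_carrier by (metis count_inI)
    qed
  qed
qed

end


fun Zg :: "nat \<Rightarrow> gterm" where
  "Zg 0 = Var 0"
| "Zg (Suc k) = Op (Var 0) (Op (Zg k) (Var 0))"

fun Mg :: "nat \<Rightarrow> gterm" where
  "Mg 0 = Var 0"
| "Mg (Suc k) = Op (Op (Var 0) (Mg k)) (Var 0)"

fun spn :: "(nat \<Rightarrow> gterm) \<Rightarrow> nat \<Rightarrow> nat \<Rightarrow> gterm" where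
  "spn h d 0 = Var 0"
| "spn h d (Suc r) = Op (h d) (spn h (Suc d) r)"

lemma image_mset_sum: "image_mset f (sum F A) = (\<Sum>x\<in>A. image_mset f (F x))"
  by (induction A rule: infinite_finite_induct) auto

lemma sum_shift_cancel:
  fixes C :: "nat \<Rightarrow> 'a::cancel_comm_monoid_add"
  assumes "C q = C 0"
  shows "(\<Sum>s<q. C (Suc s)) = (\<Sum>s<q. C s)"
proof -
  have "(\<Sum>s<Suc q. C s) = C 0 + (\<Sum>s<q. C (Suc s))" by (rule sum.lessThan_Suc_shift)
  moreover have "(\<Sum>s<Suc q. C s) = (\<Sum>s<q. C s) + C q" by simp
  ultimately show ?thesis using assms by (metis add.commute add_left_cancel)
qed

lemma sum_mod6:
  fixes Xf :: "nat \<Rightarrow> 'a::comm_monoid_add"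
  assumes r: "r < 6"
  shows "(\<Sum>e<6 * q. if e mod 6 = r then Xf e else 0) = (\<Sum>s<q. Xf (6 * s + r))"
proof (induction q)
  case (Suc q)
  have "{..<6 * Suc q} = {..<6 * q} \<union> {6 * q..<6 * q + 6}" by auto
  then have "(\<Sum>e<6 * Suc q. if e mod 6 = r then Xf e else 0) =
     (\<Sum>e<6 * q. if e mod 6 = r then Xf e else 0) + (\<Sum>e\<in>{6 * q..<6 * q + 6}. if e mod 6 = r then Xf e else 0)"
    by (simp add: sum.union_disjoint ivl_disj_int)
  also have "(\<Sum>e\<in>{6 * q..<6 * q + 6}. if e mod 6 = r then Xf e else 0) = (\<Sum>i<6. if (6 * q + i) mod 6 = r then Xf (6 * q + i) else 0)"
    by (rule sum.reindex_bij_witness[where j = "\<lambda>e. e - 6 * q" and i = "\<lambda>i. 6 * q + i"]) auto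
  also have "\<dots> = (\<Sum>i<6. if i = r then Xf (6 * q + i) else 0)"
    by (intro sum.cong HOL.refl) auto
  also have "\<dots> = Xf (6 * q + r)" using r by simp
  finally show ?case using Suc by simp
qed simp

lemma vars_Zg: "vars (Zg k) = {0}" by (induction k) auto
lemma vars_Mg: "vars (Mg k) = {0}" by (induction k) auto
lemma vars_spn: "(\<And>d. vars (h d) = {0}) \<Longrightarrow> vars (spn h d r) = {0}"
  by (induction r arbitrary: d) auto

lemma Lfz_vars: "z \<in># Lfz t \<Longrightarrow> snd z \<in> vars t"
  by (induction t arbitrary: z) (auto simp: shAL_def shBL_def)

context gset
begin

lemma WG_Var[simp]: "WG (Var x) = {#\<one>#}" by (simp add: WG_def)

lemma WG_Op: "WG (Op s t) = image_mset ((\<otimes>) a) (WG s) + image_mset ((\<otimes>) b) (WG t)"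
  by (simp add: WG_def LfG_Op multiset.map_comp o_def)
lemma WG_carrier: "z \<in># WG t \<Longrightarrow> z \<in> carrier G"
  by (auto simp: WG_def dest: LfG_carrier)

lemma LfG_WG0: "vars t = {0} \<Longrightarrow> LfG t = image_mset (\<lambda>g. (g, 0)) (WG t)"
proof -
  assume v: "vars t = {0}"
  have "LfG t = image_mset (\<lambda>z. (fst z, 0)) (LfG t)"
    unfolding LfG_def multiset.map_comp
    by (rule image_mset_cong) (use Lfz_vars v in \<open>auto simp: apfst_def map_prod_def split: prod.splits\<close>)
  then show ?thesis by (simp add: WG_def multiset.map_comp o_def)
qed

definition ln :: "nat \<Rightarrow> 'a \<Rightarrow> 'a multiset" where
  "ln k c = (\<Sum>t<k. {#c \<otimes> (a \<otimes> b) [^] t#})"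

lemma ln_Suc: "c \<in> carrier G \<Longrightarrow> ln (Suc k) c = {#c#} + image_mset ((\<otimes>) (a \<otimes> b)) (ln k c)"
  unfolding ln_def image_mset_sum
  by (simp add: sum.lessThan_Suc_shift m_ac del: sum.lessThan_Suc)

lemma ln_0[simp]: "ln 0 c = {#}" by (simp add: ln_def)

lemma ln_carrier: "c \<in> carrier G \<Longrightarrow> z \<in># ln k c \<Longrightarrow> z \<in> carrier G"
  by (induction k) (auto simp: ln_def)

lemma ln_shift: "x \<in> carrier G \<Longrightarrow> c \<in> carrier G \<Longrightarrow> image_mset ((\<otimes>) x) (ln k c) = ln k (x \<otimes> c)"
  unfolding ln_def image_mset_sum by (simp add: m_assoc)

lemma ln_rot:
  assumes L: "(a \<otimes> b) [^] L = \<one>" and c: "c \<in> carrier G"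
  shows "ln L (c \<otimes> (a \<otimes> b)) = ln L c"
proof -
  define f :: "nat \<Rightarrow> 'a multiset" where "f = (\<lambda>t. {#c \<otimes> (a \<otimes> b) [^] t#})"
  have e: "(a \<otimes> b) [^] Suc t = (a \<otimes> b) \<otimes> (a \<otimes> b) [^] t" for t by (rule nat_pow_Suc2) simp
  have e2: "c \<otimes> (a \<otimes> b) \<otimes> (a \<otimes> b) [^] t = c \<otimes> (a \<otimes> b) [^] Suc t" for t
    by (subst e) (simp add: m_assoc c)
  have "ln L (c \<otimes> (a \<otimes> b)) = (\<Sum>t<L. f (Suc t))"
    unfolding ln_def f_def using e2 by simp
  also have "\<dots> = (\<Sum>t<L. f t)" by (rule sum_shift_cancel) (simp add: f_def L c)
  finally show ?thesis by (simp add: ln_def f_def)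
qed

lemma img_WG: "c \<in> carrier G \<Longrightarrow> h \<in> carrier G \<Longrightarrow>
  image_mset ((\<otimes>) c) (image_mset ((\<otimes>) h) (WG t)) = image_mset ((\<otimes>) (c \<otimes> h)) (WG t)"
  by (rule img_comp[OF WG_carrier])
lemma img_NmG: "c \<in> carrier G \<Longrightarrow> h \<in> carrier G \<Longrightarrow>
  image_mset ((\<otimes>) c) (image_mset ((\<otimes>) h) (NmG t)) = image_mset ((\<otimes>) (c \<otimes> h)) (NmG t)"
  by (rule img_comp[OF NmG_carrier])

lemma WG_Zg: "WG (Zg k) = ln k a + ln k (b \<otimes> b) + {#(a \<otimes> b) [^] k#}"
proof (induction k)
  case 0 then show ?case by simp
next
  case (Suc k)
  have cz: "\<And>z. z \<in># WG (Zg k) \<Longrightarrow> z \<in> carrier G" by (rule WG_carrier)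
  have "WG (Zg (Suc k)) = {#a#} + {#b \<otimes> b#} + image_mset ((\<otimes>) (a \<otimes> b)) (WG (Zg k))"
    using img_comp[OF cz bC aC] by (simp add: WG_Op m_comm[of b a] add_ac)
  also have "\<dots> = ln (Suc k) a + ln (Suc k) (b \<otimes> b) + {#(a \<otimes> b) [^] Suc k#}"
    using Suc by (simp add: ln_Suc m_ac add_ac)
  finally show ?case .
qed

lemma WG_Mg: "WG (Mg k) = ln k (a \<otimes> a) + ln k b + {#(a \<otimes> b) [^] k#}"
proof (induction k)
  case 0 then show ?case by simp
next
  case (Suc k)
  have cz: "\<And>z. z \<in># WG (Mg k) \<Longrightarrow> z \<in> carrier G" by (rule WG_carrier)
  have "WG (Mg (Suc k)) = {#a \<otimes> a#} + {#b#} + image_mset ((\<otimes>) (a \<otimes> b)) (WG (Mg k))"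
    using img_comp[OF cz aC bC] by (simp add: WG_Op add_ac)
  also have "\<dots> = ln (Suc k) (a \<otimes> a) + ln (Suc k) b + {#(a \<otimes> b) [^] Suc k#}"
    using Suc by (simp add: ln_Suc m_ac add_ac)
  finally show ?case .
qed

lemma NmG_Zg: "NmG (Zg k) = ln k \<one> + ln k b"
proof (induction k)
  case 0 then show ?case by simp
next
  case (Suc k)
  have cz: "\<And>z. z \<in># NmG (Zg k) \<Longrightarrow> z \<in> carrier G" by (rule NmG_carrier)
  have "NmG (Zg (Suc k)) = {#\<one>#} + {#b#} + image_mset ((\<otimes>) (a \<otimes> b)) (NmG (Zg k))"
    using img_comp[OF cz bC aC] by (simp add: NmG_Op m_comm[of b a] add_ac)
  also have "\<dots> = ln (Suc k) \<one> + ln (Suc k) b"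
    using Suc by (simp add: ln_Suc add_ac)
  finally show ?case .
qed

lemma NmG_Mg: "NmG (Mg k) = ln k \<one> + ln k a"
proof (induction k)
  case 0 then show ?case by simp
next
  case (Suc k)
  have cz: "\<And>z. z \<in># NmG (Mg k) \<Longrightarrow> z \<in> carrier G" by (rule NmG_carrier)
  have "NmG (Mg (Suc k)) = {#\<one>#} + {#a#} + image_mset ((\<otimes>) (a \<otimes> b)) (NmG (Mg k))"
    using img_comp[OF cz aC bC] by (simp add: NmG_Op add_ac)
  also have "\<dots> = ln (Suc k) \<one> + ln (Suc k) a"
    using Suc by (simp add: ln_Suc add_ac)
  finally show ?case .
qed

lemma WG_spn: "WG (spn h d r) = (\<Sum>e<r. image_mset ((\<otimes>) (a \<otimes> b [^] e)) (WG (h (d + e)))) + {#b [^] r#}"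
proof (induction r arbitrary: d)
  case 0 then show ?case by simp
next
  case (Suc r)
  have "WG (spn h d (Suc r)) = image_mset ((\<otimes>) a) (WG (h d)) +
        (\<Sum>e<r. image_mset ((\<otimes>) b) (image_mset ((\<otimes>) (a \<otimes> b [^] e)) (WG (h (Suc d + e))))) + {#b \<otimes> b [^] r#}"
    using Suc[of "Suc d"] by (simp add: WG_Op image_mset_sum add_ac)
  also have "(\<Sum>e<r. image_mset ((\<otimes>) b) (image_mset ((\<otimes>) (a \<otimes> b [^] e)) (WG (h (Suc d + e)))))
      = (\<Sum>e<r. image_mset ((\<otimes>) (a \<otimes> b [^] Suc e)) (WG (h (d + Suc e))))"
    apply (rule sum.cong[OF HOL.refl])
    apply (subst img_WG) apply simp apply simp apply (simp add: m_ac)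
    done
  finally show ?case
    by (simp add: sum.lessThan_Suc_shift m_ac add_ac del: sum.lessThan_Suc)
qed

lemma NmG_spn: "NmG (spn h d r) = (\<Sum>e<r. {#b [^] e#} + image_mset ((\<otimes>) (a \<otimes> b [^] e)) (NmG (h (d + e))))"
proof (induction r arbitrary: d)
  case 0 then show ?case by simp
next
  case (Suc r)
  have "NmG (spn h d (Suc r)) = {#\<one>#} + image_mset ((\<otimes>) a) (NmG (h d)) +
        (\<Sum>e<r. {#b \<otimes> b [^] e#} + image_mset ((\<otimes>) b) (image_mset ((\<otimes>) (a \<otimes> b [^] e)) (NmG (h (Suc d + e)))))"
    using Suc[of "Suc d"] by (simp add: NmG_Op image_mset_sum add_ac)
  also have "(\<Sum>e<r. {#b \<otimes> b [^] e#} + image_mset ((\<otimes>) b) (image_mset ((\<otimes>) (a \<otimes> b [^] e)) (NmG (h (Suc d + e)))))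
      = (\<Sum>e<r. {#b [^] Suc e#} + image_mset ((\<otimes>) (a \<otimes> b [^] Suc e)) (NmG (h (d + Suc e))))"
    apply (rule sum.cong[OF HOL.refl])
    apply (subst img_NmG) apply simp apply simp apply (simp add: m_ac)
    done
  finally show ?case
    by (simp add: sum.lessThan_Suc_shift m_ac add_ac del: sum.lessThan_Suc)
qed

end


lemma mem_sum_mset: "finite A \<Longrightarrow> z \<in># sum F A \<Longrightarrow> \<exists>x\<in>A. z \<in># F x"
  by (induction A rule: finite_induct) auto

context gset
begin

lemma ab_pow: "(a \<otimes> b) [^] (t::nat) = phi (t, t)"
  by (simp add: phi_def nat_pow_distrib)

lemma ln_mem: "c \<in> carrier G \<Longrightarrow> z \<in># ln k c \<Longrightarrow> \<exists>t. z = c \<otimes> phi (t, t)"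
  unfolding ln_def using mem_sum_mset[of "{..<k}" z "\<lambda>t. {#c \<otimes> (a \<otimes> b) [^] t#}"]
  by (auto simp: ab_pow)

lemma ln_self: "c \<in> carrier G \<Longrightarrow> k > 0 \<Longrightarrow> c \<in># ln k c"
  unfolding ln_def by (cases k) (auto simp: sum.lessThan_Suc_shift simp del: sum.lessThan_Suc)

lemma mm: "(6::nat) dvd m \<Longrightarrow> x mod m = y mod m \<Longrightarrow> x mod 6 = y mod 6" by (metis mod_mod_cancel)

lemma phi_c1: "a \<otimes> b [^] (e::nat) \<otimes> phi (t, t) = phi (1 + t, e + t)"
proof -
  have "phi (1 + t, e + t) = phi (1, e) \<otimes> phi (t, t)" by (rule phi_add)
  moreover have "phi (1, e) = a \<otimes> b [^] e" by (simp add: phi_def)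
  ultimately show ?thesis by simp
qed

lemma phi_c2: "a \<otimes> b [^] (e::nat) \<otimes> a \<otimes> phi (t, t) = phi (2 + t, e + t)"
proof -
  have "phi (2 + t, e + t) = phi (2, e) \<otimes> phi (t, t)" by (rule phi_add)
  moreover have "phi (2, e) = a \<otimes> b [^] e \<otimes> a"
    by (simp add: phi_def numeral_2_eq_2 m_assoc m_comm[of "b [^] e" a])
  ultimately show ?thesis by simp
qed

lemma b_pow2: "b [^] ((k::nat) + 2) = b [^] k \<otimes> b \<otimes> b"
  by (simp add: numeral_2_eq_2)

lemma counterexample:
  fixes m n :: nat
  assumes am: "a [^] m = \<one>" and bn: "b [^] n = \<one>" and m: "m > 0" and n: "n > 0"
    and m6: "6 dvd m" and n6: "6 dvd n"
    and phieq: "\<And>i j i' j'. phi (i, j) = phi (i', j') \<Longrightarrow> i mod m = i' mod m \<and> j mod n = j' mod n"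
  shows "\<exists>S T. LfG S = LfG T \<and> NmG S \<noteq> NmG T"
proof -
  define L where "L = m * n"
  have L0: "L > 0" using m n by (simp add: L_def)
  have abL: "(a \<otimes> b) [^] L = \<one>"
  proof -
    have "(a \<otimes> b) [^] (m * n) = a [^] (m * n) \<otimes> b [^] (m * n)" by (simp add: nat_pow_distrib)
    also have "a [^] (m * n) = \<one>" by (simp add: nat_pow_pow[symmetric] am)
    also have "b [^] (m * n) = \<one>" by (simp add: nat_pow_pow[symmetric] bn mult.commute[of m n])
    finally show ?thesis by (simp add: L_def)
  qed
  define hS :: "nat \<Rightarrow> gterm" where "hS = (\<lambda>d. if d mod 6 = 2 then Zg L else Var 0)"
  define hT :: "nat \<Rightarrow> gterm" where "hT = (\<lambda>d. if d mod 6 = 0 then Mg L else Var 0)"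
  define S where "S = spn hS 0 n"
  define T where "T = spn hT 0 n"
  obtain q where q: "n = 6 * q" using n6 by (auto simp: dvd_def)
  define c where "c = (\<lambda>e::nat. a \<otimes> b [^] e)"
  have cC[simp]: "c e \<in> carrier G" for e by (simp add: c_def)
  have rot: "ln L (x \<otimes> (a \<otimes> b)) = ln L x" if "x \<in> carrier G" for x using ln_rot[OF abL that] .
  define XS where "XS = (\<lambda>e. ln L (c e \<otimes> a) + ln L (c e \<otimes> (b \<otimes> b)))"
  define XT where "XT = (\<lambda>e. ln L (c e \<otimes> (a \<otimes> a)) + ln L (c e \<otimes> b))"
  have hSW: "image_mset ((\<otimes>) (c e)) (WG (hS e)) = {#c e#} + (if e mod 6 = 2 then XS e else {#})" for e
    by (simp add: hS_def WG_Zg abL ln_shift XS_def m_assoc add_ac)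
  have hTW: "image_mset ((\<otimes>) (c e)) (WG (hT e)) = {#c e#} + (if e mod 6 = 0 then XT e else {#})" for e
    by (simp add: hT_def WG_Mg abL ln_shift XT_def m_assoc add_ac)
  have WS: "WG S = (\<Sum>e<n. {#c e#}) + (\<Sum>s<q. XS (6 * s + 2)) + {#b [^] n#}"
  proof -
    have "WG S = (\<Sum>e<n. {#c e#} + (if e mod 6 = 2 then XS e else {#})) + {#b [^] n#}"
      unfolding S_def WG_spn using hSW by (simp add: c_def)
    also have "\<dots> = (\<Sum>e<n. {#c e#}) + (\<Sum>e<n. if e mod 6 = 2 then XS e else {#}) + {#b [^] n#}"
      by (simp only: sum.distrib)
    finally show ?thesis using sum_mod6[of 2 XS q] q by simp
  qed
  have WT: "WG T = (\<Sum>e<n. {#c e#}) + (\<Sum>s<q. XT (6 * s + 0)) + {#b [^] n#}"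
  proof -
    have "WG T = (\<Sum>e<n. {#c e#} + (if e mod 6 = 0 then XT e else {#})) + {#b [^] n#}"
      unfolding T_def WG_spn using hTW by (simp add: c_def)
    also have "\<dots> = (\<Sum>e<n. {#c e#}) + (\<Sum>e<n. if e mod 6 = 0 then XT e else {#}) + {#b [^] n#}"
      by (simp only: sum.distrib)
    finally show ?thesis using sum_mod6[of 0 XT q] q by simp
  qed
  define C where "C = (\<lambda>s. ln L (c (6 * s) \<otimes> (a \<otimes> a)))"
  define D where "D = (\<lambda>s. ln L (c (6 * s) \<otimes> b))"
  have e1: "ln L (c (6 * s + 2) \<otimes> a) = D s" for s
  proof -
    have "c (6 * s + 2) \<otimes> a = (c (6 * s) \<otimes> b) \<otimes> (a \<otimes> b)"
      by (simp add: c_def b_pow2 m_ac)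
    then show ?thesis using rot[of "c (6 * s) \<otimes> b"] by (simp add: D_def)
  qed
  have e2: "ln L (c (6 * s + 2) \<otimes> (b \<otimes> b)) = C (Suc s)" for s
  proof -
    have "c (6 * Suc s) \<otimes> (a \<otimes> a) = ((c (6 * s + 2) \<otimes> (b \<otimes> b)) \<otimes> (a \<otimes> b)) \<otimes> (a \<otimes> b)"
    proof -
      have "6 * Suc s = ((6 * s + 2) + 2) + 2" by simp
      then show ?thesis by (simp only: c_def b_pow2) (simp add: m_ac)
    qed
    then show ?thesis using rot[of "c (6 * s + 2) \<otimes> (b \<otimes> b)"] rot[of "(c (6 * s + 2) \<otimes> (b \<otimes> b)) \<otimes> (a \<otimes> b)"]
      by (simp add: C_def)
  qed
  have Cq: "C q = C 0"
    using q bn by (simp add: C_def c_def)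
  have "(\<Sum>s<q. XS (6 * s + 2)) = (\<Sum>s<q. D s + C (Suc s))"
    unfolding XS_def e1 e2 by (rule HOL.refl)
  also have "\<dots> = (\<Sum>s<q. D s) + (\<Sum>s<q. C (Suc s))" by (rule sum.distrib)
  also have "(\<Sum>s<q. C (Suc s)) = (\<Sum>s<q. C s)" by (rule sum_shift_cancel[OF Cq])
  also have "(\<Sum>s<q. D s) + (\<Sum>s<q. C s) = (\<Sum>s<q. XT (6 * s + 0))"
    by (simp add: XT_def C_def D_def sum.distrib add.commute)
  finally have "WG S = WG T" using WS WT by simp
  moreover have "vars S = {0}" "vars T = {0}"
    unfolding S_def T_def by (auto intro!: vars_spn simp: hS_def hT_def vars_Zg vars_Mg split: if_splits)
  ultimately have LST: "LfG S = LfG T" by (simp add: LfG_WG0)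
  have hSN: "image_mset ((\<otimes>) (c e)) (NmG (hS e)) = (if e mod 6 = 2 then ln L (c e) + ln L (c e \<otimes> b) else {#})" for e
    by (simp add: hS_def NmG_Zg ln_shift)
  have hTN: "image_mset ((\<otimes>) (c e)) (NmG (hT e)) = (if e mod 6 = 0 then ln L (c e) + ln L (c e \<otimes> a) else {#})" for e
    by (simp add: hT_def NmG_Mg ln_shift)
  define ES where "ES = (\<Sum>e<n. if e mod 6 = 2 then ln L (c e) + ln L (c e \<otimes> b) else {#})"
  define ET where "ET = (\<Sum>e<n. if e mod 6 = 0 then ln L (c e) + ln L (c e \<otimes> a) else {#})"
  have NS: "NmG S = (\<Sum>e<n. {#b [^] e#}) + ES"
  proof -
    have "NmG S = (\<Sum>e<n. {#b [^] e#} + image_mset ((\<otimes>) (c e)) (NmG (hS e)))"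
      by (simp add: S_def NmG_spn c_def)
    also have "\<dots> = (\<Sum>e<n. {#b [^] e#}) + (\<Sum>e<n. image_mset ((\<otimes>) (c e)) (NmG (hS e)))"
      by (simp only: sum.distrib)
    finally show ?thesis using hSN by (simp add: ES_def)
  qed
  have NT: "NmG T = (\<Sum>e<n. {#b [^] e#}) + ET"
  proof -
    have "NmG T = (\<Sum>e<n. {#b [^] e#} + image_mset ((\<otimes>) (c e)) (NmG (hT e)))"
      by (simp add: T_def NmG_spn c_def)
    also have "\<dots> = (\<Sum>e<n. {#b [^] e#}) + (\<Sum>e<n. image_mset ((\<otimes>) (c e)) (NmG (hT e)))"
      by (simp only: sum.distrib)
    finally show ?thesis using hTN by (simp add: ET_def)
  qed
  have bES: "count ES b > 0"
  proof -
    define F where "F = (\<lambda>e::nat. if e mod 6 = 2 then ln L (c e) + ln L (c e \<otimes> b) else {#})"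
    have "2 < n" using q n by simp
    have c2: "c 2 = b \<otimes> (a \<otimes> b)" by (simp add: c_def numeral_2_eq_2 m_ac)
    have "b \<in># ln L b" using ln_self[of b L] L0 by simp
    then have "b \<in># ln L (c 2)" using rot[of b] c2 by simp
    moreover have "F 2 = ln L (c 2) + ln L (c 2 \<otimes> b)" by (simp add: F_def)
    ultimately have pos: "count (F 2) b > 0" by simp
    have "count (F 2) b \<le> (\<Sum>e\<in>{..<n}. count (F e) b)"
      by (rule member_le_sum) (use \<open>2 < n\<close> in auto)
    also have "\<dots> = count ES b" unfolding ES_def F_def count_sum by (rule HOL.refl)
    finally show ?thesis using pos by linarith
  qed
  have bET: "b \<notin># ET"
  proof
    assume "b \<in># ET"
    then obtain e where e: "e \<in> {..<n}" "b \<in># (if e mod 6 = 0 then ln L (c e) + ln L (c e \<otimes> a) else {#})"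
      unfolding ET_def using mem_sum_mset[of "{..<n}" b "\<lambda>e. if e mod 6 = 0 then ln L (c e) + ln L (c e \<otimes> a) else {#}"]
      by (meson finite_lessThan)
    have e6: "e mod 6 = 0"
    proof (rule ccontr)
      assume "e mod 6 \<noteq> 0"
      then show False using e(2) by simp
    qed
    have bphi: "b = phi (0, 1)" by (simp add: phi_def)
    have "\<exists>t. b = phi (1 + t, e + t) \<or> b = phi (2 + t, e + t)"
    proof -
      have "b \<in># ln L (c e) + ln L (c e \<otimes> a)" using e(2)[unfolded if_P[OF e6]] .
      then have "b \<in># ln L (c e) \<or> b \<in># ln L (c e \<otimes> a)" by (rule union_iff[THEN iffD1])
      then show ?thesis
      proof
        assume h: "b \<in># ln L (c e)"
        obtain t where "b = c e \<otimes> phi (t, t)" using ln_mem[OF cC h] by blast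
        moreover have "c e \<otimes> phi (t, t) = phi (1 + t, e + t)"
          unfolding c_def by (rule phi_c1)
        ultimately show ?thesis by auto
      next
        assume h: "b \<in># ln L (c e \<otimes> a)"
        obtain t where "b = c e \<otimes> a \<otimes> phi (t, t)" using ln_mem[OF m_closed[OF cC aC] h] by blast
        moreover have "c e \<otimes> a \<otimes> phi (t, t) = phi (2 + t, e + t)"
          unfolding c_def by (rule phi_c2)
        ultimately show ?thesis by auto
      qed
    qed
    then obtain t where t: "phi (0, 1) = phi (1 + t, e + t) \<or> phi (0, 1) = phi (2 + t, e + t)"
      using bphi by auto
    then show False
    proof
      assume "phi (0, 1) = phi (1 + t, e + t)"
      then have "0 mod m = (1 + t) mod m" "1 mod n = (e + t) mod n" using phieq by blast+
      then have "0 mod 6 = (1 + t) mod 6" "1 mod 6 = (e + t) mod 6" using m6 n6 mm by blast+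
      then show False using e6 by presburger
    next
      assume "phi (0, 1) = phi (2 + t, e + t)"
      then have "0 mod m = (2 + t) mod m" "1 mod n = (e + t) mod n" using phieq by blast+
      then have "0 mod 6 = (2 + t) mod 6" "1 mod 6 = (e + t) mod 6" using m6 n6 mm by blast+
      then show False using e6 by presburger
    qed
  qed
  have "count (NmG S) b \<noteq> count (NmG T) b"
    using bES bET NS NT by (simp add: count_eq_zero_iff[symmetric])
  then have "NmG S \<noteq> NmG T" by auto
  with LST show ?thesis by blast
qed

end


context gset
begin

lemma gen_phi:
  assumes am: "a [^] (m::nat) = \<one>" and bn: "b [^] (n::nat) = \<one>" and m: "m > 0" and n: "n > 0"
  shows "x \<in> generate G {a, b} \<Longrightarrow> x \<in> range phi"
proof (induction x rule: generate.induct)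
  case one
  then show ?case using phi_0 by (metis rangeI)
next
  case (incl h)
  have "phi (1, 0) = a" "phi (0, 1) = b" by (simp_all add: phi_def)
  then show ?case using incl by (metis empty_iff insert_iff rangeI)
next
  case (inv h)
  have ia: "inv a = phi (m - 1, 0)"
  proof -
    have "a [^] (m - 1) \<otimes> a = a [^] m" using m by (metis Suc_diff_1 nat_pow_Suc)
    then have "inv a = a [^] (m - 1)" using am by (intro inv_equality) auto
    then show ?thesis by (simp add: phi_def)
  qed
  have ib: "inv b = phi (0, n - 1)"
  proof -
    have "b [^] (n - 1) \<otimes> b = b [^] n" using n by (metis Suc_diff_1 nat_pow_Suc)
    then have "inv b = b [^] (n - 1)" using bn by (intro inv_equality) auto
    then show ?thesis by (simp add: phi_def)
  qed
  show ?case using inv ia ib by (metis empty_iff insert_iff rangeI)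
next
  case (eng h1 h2)
  then obtain w1 w2 where "h1 = phi w1" "h2 = phi w2" by auto
  then have "h1 \<otimes> h2 = phi (fst w1 + fst w2, snd w1 + snd w2)" by (simp add: phi_add)
  then show ?case by (metis rangeI)
qed

lemma cancel3: "x \<in> carrier G \<Longrightarrow> y \<in> carrier G \<Longrightarrow> z \<in> carrier G \<Longrightarrow> x \<otimes> (y \<otimes> (inv x \<otimes> z)) = y \<otimes> z"
proof -
  assume c: "x \<in> carrier G" "y \<in> carrier G" "z \<in> carrier G"
  have "x \<otimes> (y \<otimes> (inv x \<otimes> z)) = y \<otimes> (x \<otimes> (inv x \<otimes> z))" using c by (simp add: m_lcomm)
  also have "x \<otimes> (inv x \<otimes> z) = z" using c by (simp add: m_assoc[symmetric])
  finally show ?thesis .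
qed

lemma phi_eq_mod:
  assumes inter: "generate G {a} \<inter> generate G {b} = {\<one>}"
  shows "phi (i, j) = phi (i', j') \<Longrightarrow> i mod ord a = i' mod ord a \<and> j mod ord b = j' mod ord b"
proof -
  assume e: "phi (i, j) = phi (i', j')"
  define x where "x = a [^] (int i - int i')"
  define y where "y = b [^] (int j' - int j)"
  have x: "x = a [^] i \<otimes> inv (a [^] i')" by (simp add: x_def int_pow_diff int_pow_int)
  have y: "y = b [^] j' \<otimes> inv (b [^] j)" by (simp add: y_def int_pow_diff int_pow_int)
  have e2: "a [^] i \<otimes> b [^] j = a [^] i' \<otimes> b [^] j'" using e by (simp add: phi_def)
  have "x = y"
  proof -
    have "x = (a [^] i \<otimes> b [^] j) \<otimes> (inv (a [^] i') \<otimes> inv (b [^] j))"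
      unfolding x by (simp add: m_ac)
    also have "\<dots> = (a [^] i' \<otimes> b [^] j') \<otimes> (inv (a [^] i') \<otimes> inv (b [^] j))" using e2 by simp
    also have "\<dots> = y" unfolding y by (simp add: m_assoc cancel3)
    finally show ?thesis .
  qed
  have "x \<in> generate G {a}" using generate_pow[OF aC] by (auto simp: x_def)
  moreover have "y \<in> generate G {b}" using generate_pow[OF bC] by (auto simp: y_def)
  ultimately have "x = \<one>" "y = \<one>" using inter \<open>x = y\<close> by auto
  then have "int (ord a) dvd (int i - int i')" "int (ord b) dvd (int j' - int j)"
    using int_pow_eq_id[OF aC] int_pow_eq_id[OF bC] by (auto simp: x_def y_def)
  then show ?thesis
    by (metis mod_eq_dvd_iff of_nat_eq_iff zmod_int dvd_diff_commute)
qed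

end

theorem main:
  fixes G (structure) and \<alpha> \<beta> :: 'a and m n :: nat
  assumes "comm_group G"
    and "\<alpha> \<in> carrier G" and "\<beta> \<in> carrier G"
    and "carrier G = generate G {\<alpha>, \<beta>}"
    and "generate G {\<alpha>} \<inter> generate G {\<beta>} = {\<one>}"
    and "group.ord G \<alpha> = m" and "group.ord G \<beta> = n"
    and "0 < m" and "0 < n"
  shows "is_basis (Sigma_id G \<alpha> \<beta> \<inter> {e. interchange_law e}) (Sigma_id G \<alpha> \<beta>)
         \<longleftrightarrow> \<not> (6 dvd m \<and> 6 dvd n)"
proof -
  interpret gset G \<alpha> \<beta> by (intro gset.intro gset_axioms.intro assms(1-3))
  have am: "\<alpha> [^] m = \<one>" using assms(6) pow_ord_eq_1[OF assms(2)] by simp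
  have bn: "\<beta> [^] n = \<one>" using assms(7) pow_ord_eq_1[OF assms(3)] by simp
  have gen: "carrier G \<subseteq> range phi" using gen_phi[OF am bn assms(8,9)] assms(4) by auto
  have phieq: "\<And>i j i' j'. phi (i, j) = phi (i', j') \<Longrightarrow> i mod m = i' mod m \<and> j mod n = j' mod n"
    using phi_eq_mod[OF assms(5)] assms(6,7) by blast
  show ?thesis
  proof
    assume B: "is_basis (Sigma_id G \<alpha> \<beta> \<inter> {e. interchange_law e}) (Sigma_id G \<alpha> \<beta>)"
    show "\<not> (6 dvd m \<and> 6 dvd n)"
    proof
      assume six: "6 dvd m \<and> 6 dvd n"
      obtain S T where ST: "LfG S = LfG T" "NmG S \<noteq> NmG T"
        using counterexample[OF am bn assms(8,9) _ _ phieq] six by blast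
      have "(S, T) \<in> Sigma_id G \<alpha> \<beta>" using ST(1) Sigma_char by simp
      then have "(S, T) \<in> eq_cons BB" using B by (simp add: is_basis_def)
      then show False using E_inv ST(2) by blast
    qed
  next
    assume no6: "\<not> (6 dvd m \<and> 6 dvd n)"
    have "eq_cons BB = Sigma_id G \<alpha> \<beta>"
    proof
      show "eq_cons BB \<subseteq> Sigma_id G \<alpha> \<beta>" using E_Sigma by auto
      show "Sigma_id G \<alpha> \<beta> \<subseteq> eq_cons BB"
      proof
        fix e assume "e \<in> Sigma_id G \<alpha> \<beta>"
        moreover obtain p q where e: "e = (p, q)" by force
        ultimately have L: "LfG p = LfG q" using Sigma_char by simp
        then have "WG p = WG q" by (simp add: WG_def)
        then have "NmG p = NmG q" using W_determines_N[OF am bn assms(8,9) gen no6] by blast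
        then show "e \<in> eq_cons BB" using conn_G L e by simp
      qed
    qed
    then show "is_basis (Sigma_id G \<alpha> \<beta> \<inter> {e. interchange_law e}) (Sigma_id G \<alpha> \<beta>)"
      by (simp add: is_basis_def)
  qed
qed


theorem theorem9p2:
  fixes G (structure) and \<alpha> \<beta> :: 'a and m n :: nat
  assumes "comm_group G"
    and "\<alpha> \<in> carrier G" and "\<beta> \<in> carrier G"
    and "carrier G = generate G {\<alpha>, \<beta>}"
    and "generate G {\<alpha>} \<inter> generate G {\<beta>} = {\<one>}"
    and "group.ord G \<alpha> = m" and "group.ord G \<beta> = n"
    and "0 < m" and "0 < n"
  shows "is_basis (Sigma_id G \<alpha> \<beta> \<inter> {e. interchange_law e}) (Sigma_id G \<alpha> \<beta>)
         \<longleftrightarrow> \<not> (6 dvd m \<and> 6 dvd n)"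
  using assms by (rule main)

end
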